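(* Let $G$ be a snark with colouring defect $\mathrm{df}(G)=3$. If $G$ contains a hexagonal core that intersects a triangle (shares at least one vertex with a triangle of $G$), then $\pi(G)=4$.
   Context: Graphs are finite; loops and multiple edges are allowed. A snark is a $2$-connected cubic graph with no proper $3$-edge-colouring. A $3$-array of a bridgeless cubic graph $H$ is a set of three perfect matchings of $H$; an edge is uncovered if it lies in none of them and simply covered if in exactly one. The colouring defect $\mathrm{df}(H)$ is the minimum number of uncovered edges over all $3$-arrays; a $3$-array attaining this minimum is optimal. The core of a $3$-array is the subgraph formed by all edges that are not simply covered. If $\mathrm{df}(H)=3$, the core of every optimal $3$-array is an induced $6$-cycle, called a hexagonal core. The perfect matching index $\pi(G)$ is the smallest number of perfect matchings of $G$ whose union is $E(G)$. *)

theory Defs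
  imports Main
begin

text \<open>Finite multigraphs (loops and parallel edges allowed): a vertex set V, an edge set E
  and an endpoint map ep assigning to each edge its two (possibly equal) ends.\<close>

definition ends :: "('e \<Rightarrow> 'v \<times> 'v) \<Rightarrow> 'e \<Rightarrow> 'v set" where
  "ends ep e = {fst (ep e), snd (ep e)}"

definition is_loop :: "('e \<Rightarrow> 'v \<times> 'v) \<Rightarrow> 'e \<Rightarrow> bool" where
  "is_loop ep e \<longleftrightarrow> fst (ep e) = snd (ep e)"

definition graph :: "'v set \<Rightarrow> 'e set \<Rightarrow> ('e \<Rightarrow> 'v \<times> 'v) \<Rightarrow> bool" where
  "graph V E ep \<longleftrightarrow> finite V \<and> finite E \<and> (\<forall>e\<in>E. fst (ep e) \<in> V \<and> snd (ep e) \<in> V)"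

text \<open>Degree: a loop contributes 2.\<close>
definition degree :: "'e set \<Rightarrow> ('e \<Rightarrow> 'v \<times> 'v) \<Rightarrow> 'v \<Rightarrow> nat" where
  "degree E ep v = card {e\<in>E. fst (ep e) = v} + card {e\<in>E. snd (ep e) = v}"

definition cubic :: "'v set \<Rightarrow> 'e set \<Rightarrow> ('e \<Rightarrow> 'v \<times> 'v) \<Rightarrow> bool" where
  "cubic V E ep \<longleftrightarrow> graph V E ep \<and> (\<forall>v\<in>V. degree E ep v = 3)"

definition adj_in :: "'e set \<Rightarrow> ('e \<Rightarrow> 'v \<times> 'v) \<Rightarrow> 'v set \<Rightarrow> ('v \<times> 'v) set" where
  "adj_in E ep S = {(x, y). x \<in> S \<and> y \<in> S \<and> (\<exists>e\<in>E. ep e = (x, y) \<or> ep e = (y, x))}"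

definition connected_on :: "'e set \<Rightarrow> ('e \<Rightarrow> 'v \<times> 'v) \<Rightarrow> 'v set \<Rightarrow> bool" where
  "connected_on E ep S \<longleftrightarrow> (\<forall>x\<in>S. \<forall>y\<in>S. (x, y) \<in> (adj_in E ep S)\<^sup>*)"

definition two_connected :: "'v set \<Rightarrow> 'e set \<Rightarrow> ('e \<Rightarrow> 'v \<times> 'v) \<Rightarrow> bool" where
  "two_connected V E ep \<longleftrightarrow> card V \<ge> 3 \<and> connected_on E ep V \<and>
     (\<forall>v\<in>V. connected_on E ep (V - {v}))"

text \<open>Proper 3-edge-colouring: adjacent (distinct, sharing an end) edges get different colours;
  a loop is adjacent to itself, so graphs with loops are not colourable.\<close>
definition three_edge_colourable :: "'e set \<Rightarrow> ('e \<Rightarrow> 'v \<times> 'v) \<Rightarrow> bool" where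
  "three_edge_colourable E ep \<longleftrightarrow> (\<exists>c :: 'e \<Rightarrow> nat.
      (\<forall>e\<in>E. c e < 3 \<and> \<not> is_loop ep e) \<and>
      (\<forall>e\<in>E. \<forall>f\<in>E. e \<noteq> f \<and> ends ep e \<inter> ends ep f \<noteq> {} \<longrightarrow> c e \<noteq> c f))"

definition snark :: "'v set \<Rightarrow> 'e set \<Rightarrow> ('e \<Rightarrow> 'v \<times> 'v) \<Rightarrow> bool" where
  "snark V E ep \<longleftrightarrow> cubic V E ep \<and> two_connected V E ep \<and> \<not> three_edge_colourable E ep"

definition perfect_matching :: "'v set \<Rightarrow> 'e set \<Rightarrow> ('e \<Rightarrow> 'v \<times> 'v) \<Rightarrow> 'e set \<Rightarrow> bool" where
  "perfect_matching V E ep M \<longleftrightarrow> M \<subseteq> E \<and> (\<forall>e\<in>M. \<not> is_loop ep e) \<and>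
     (\<forall>v\<in>V. card {e\<in>M. v \<in> ends ep e} = 1)"

definition three_array :: "'v set \<Rightarrow> 'e set \<Rightarrow> ('e \<Rightarrow> 'v \<times> 'v) \<Rightarrow> 'e set \<times> 'e set \<times> 'e set \<Rightarrow> bool" where
  "three_array V E ep A \<longleftrightarrow> (case A of (M1, M2, M3) \<Rightarrow>
     perfect_matching V E ep M1 \<and> perfect_matching V E ep M2 \<and> perfect_matching V E ep M3 \<and>
     M1 \<noteq> M2 \<and> M1 \<noteq> M3 \<and> M2 \<noteq> M3)"

definition cover_count :: "'e set \<times> 'e set \<times> 'e set \<Rightarrow> 'e \<Rightarrow> nat" where
  "cover_count A e = (case A of (M1, M2, M3) \<Rightarrow>
     (if e \<in> M1 then 1 else 0) + (if e \<in> M2 then 1 else 0) + (if e \<in> M3 then 1 else 0))"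

definition uncovered :: "'e set \<Rightarrow> 'e set \<times> 'e set \<times> 'e set \<Rightarrow> 'e set" where
  "uncovered E A = {e\<in>E. cover_count A e = 0}"

definition colouring_defect :: "'v set \<Rightarrow> 'e set \<Rightarrow> ('e \<Rightarrow> 'v \<times> 'v) \<Rightarrow> nat" where
  "colouring_defect V E ep = Min {card (uncovered E A) | A. three_array V E ep A}"

definition optimal_array :: "'v set \<Rightarrow> 'e set \<Rightarrow> ('e \<Rightarrow> 'v \<times> 'v) \<Rightarrow> 'e set \<times> 'e set \<times> 'e set \<Rightarrow> bool" where
  "optimal_array V E ep A \<longleftrightarrow> three_array V E ep A \<and>
     card (uncovered E A) = colouring_defect V E ep"

definition core :: "'e set \<Rightarrow> 'e set \<times> 'e set \<times> 'e set \<Rightarrow> 'e set" where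
  "core E A = {e\<in>E. cover_count A e \<noteq> 1}"

definition induced_hexagon_on :: "'v set \<Rightarrow> 'e set \<Rightarrow> ('e \<Rightarrow> 'v \<times> 'v) \<Rightarrow> 'e set \<Rightarrow> (nat \<Rightarrow> 'v) \<Rightarrow> bool" where
  "induced_hexagon_on V E ep C vs \<longleftrightarrow>
     inj_on vs {..<6} \<and> vs ` {..<6} \<subseteq> V \<and>
     (\<forall>i<6. card {e\<in>E. ends ep e = {vs i, vs (Suc i mod 6)}} = 1) \<and>
     (\<forall>e\<in>E. ends ep e \<subseteq> vs ` {..<6} \<longrightarrow> (\<exists>i<6. ends ep e = {vs i, vs (Suc i mod 6)})) \<and>
     C = {e\<in>E. \<exists>i<6. ends ep e = {vs i, vs (Suc i mod 6)}}"

definition triangle :: "'v set \<Rightarrow> 'e set \<Rightarrow> ('e \<Rightarrow> 'v \<times> 'v) \<Rightarrow> 'v set \<Rightarrow> bool" where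
  "triangle V E ep T \<longleftrightarrow> (\<exists>a b c. T = {a, b, c} \<and> a \<noteq> b \<and> b \<noteq> c \<and> a \<noteq> c \<and>
     (\<exists>e\<in>E. ends ep e = {a, b}) \<and> (\<exists>e\<in>E. ends ep e = {b, c}) \<and> (\<exists>e\<in>E. ends ep e = {a, c}))"

definition perfect_matching_index :: "'v set \<Rightarrow> 'e set \<Rightarrow> ('e \<Rightarrow> 'v \<times> 'v) \<Rightarrow> nat" where
  "perfect_matching_index V E ep = (LEAST k. \<exists>F. finite F \<and> card F = k \<and>
     (\<forall>M\<in>F. perfect_matching V E ep M) \<and> \<Union>F = E)"

end

theory Submission
  imports Defs
begin


lemma orbit2:
  fixes X Y :: "'v \<Rightarrow> 'v"
  assumes XX: "\<And>v. X (X v) = v" and YY: "\<And>v. Y (Y v) = v"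
    and Yp: "Y p = p" and Xp: "X p \<noteq> p" and finS: "finite S"
    and cl: "\<And>v. v \<in> S \<Longrightarrow> X v \<in> S \<and> Y v \<in> S" and pS: "p \<in> S"
  shows "\<exists>Ob q. p \<in> Ob \<and> q \<in> Ob \<and> q \<noteq> p \<and> (X q = q \<or> Y q = q) \<and> \<not> (X q = q \<and> Y q = q)
     \<and> (\<forall>v\<in>Ob. X v \<in> Ob \<and> Y v \<in> Ob) \<and> (\<forall>v\<in>Ob. (X v = v \<or> Y v = v) \<longrightarrow> v = p \<or> v = q)"
proof -
  define s where "s = Y \<circ> X"
  have injX: "inj X" by (metis XX injI)
  have injY: "inj Y" by (metis YY injI)
  have injs: "inj s" unfolding s_def using injX injY by (simp add: inj_compose)
  have injk: "inj (s ^^ k)" for k using injs by simp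
  have sS: "(s ^^ k) p \<in> S" for k
    by (induction k) (auto simp: s_def pS cl)
  have "finite (range (\<lambda>k. (s ^^ k) p))" using sS finS
    by (metis (no_types, lifting) finite_subset image_subsetI)
  hence "\<not> inj (\<lambda>k. (s ^^ k) p)" using finite_imageD infinite_UNIV_nat by blast
  then obtain i j where ij: "i \<noteq> j" "(s ^^ i) p = (s ^^ j) p" unfolding inj_def by blast
  have "\<exists>m>0. (s ^^ m) p = p"
  proof (cases "i < j")
    case True
    have "(s ^^ i) ((s ^^ (j - i)) p) = (s ^^ (i + (j - i))) p" by (simp add: funpow_add)
    also have "i + (j - i) = j" using True by simp
    finally have "(s ^^ i) ((s ^^ (j - i)) p) = (s ^^ i) p" using ij by simp
    hence "(s ^^ (j - i)) p = p" using injk[of i] by (meson injD)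
    thus ?thesis using True by (intro exI[of _ "j - i"]) auto
  next
    case False
    hence J: "j < i" using ij by auto
    have "(s ^^ j) ((s ^^ (i - j)) p) = (s ^^ (j + (i - j))) p" by (simp add: funpow_add)
    also have "j + (i - j) = i" using J by simp
    finally have "(s ^^ j) ((s ^^ (i - j)) p) = (s ^^ j) p" using ij by simp
    hence "(s ^^ (i - j)) p = p" using injk[of j] by (meson injD)
    thus ?thesis using J by (intro exI[of _ "i - j"]) auto
  qed
  define n where "n = (LEAST m. m > 0 \<and> (s ^^ m) p = p)"
  have n: "n > 0" "(s ^^ n) p = p" using LeastI_ex[OF \<open>\<exists>m>0. (s ^^ m) p = p\<close>] n_def by auto
  have nmin: "\<And>m. 0 < m \<Longrightarrow> m < n \<Longrightarrow> (s ^^ m) p \<noteq> p"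
    using n_def not_less_Least by blast
  have mult: "(s ^^ (n * k)) p = p" for k
  proof (induction k)
    case (Suc k)
    have "(s ^^ (n * Suc k)) p = (s ^^ n) ((s ^^ (n * k)) p)"
      by (simp add: funpow_add add.commute)
    thus ?case using Suc n by simp
  qed simp
  have red: "(s ^^ m) p = (s ^^ (m mod n)) p" for m
  proof -
    have "(s ^^ (m mod n + n * (m div n))) p = (s ^^ (m mod n)) ((s ^^ (n * (m div n))) p)"
      by (simp only: funpow_add o_apply)
    moreover have "m mod n + n * (m div n) = m" by simp
    ultimately have "(s ^^ m) p = (s ^^ (m mod n)) ((s ^^ (n * (m div n))) p)" by metis
    thus ?thesis using mult by simp
  qed
  have per: "(s ^^ m) p = p \<longleftrightarrow> n dvd m" for m
  proof
    assume "(s ^^ m) p = p"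
    hence "(s ^^ (m mod n)) p = p" using red by simp
    hence "m mod n = 0" using nmin[of "m mod n"] n(1) by (meson mod_less_divisor not_gr_zero)
    thus "n dvd m" by auto
  next
    assume "n dvd m" thus "(s ^^ m) p = p" using mult by auto
  qed
  have sYs: "s (Y (s u)) = Y u" for u unfolding s_def using XX YY by simp
  have sXs: "s (X (s u)) = X u" for u unfolding s_def using XX YY by simp
  have Yid: "(s ^^ k) (Y ((s ^^ k) p)) = p" for k
  proof (induction k)
    case 0 thus ?case using Yp by simp
  next
    case (Suc k)
    have e1: "(s ^^ Suc k) p = s ((s ^^ k) p)" by simp
    have e2: "(s ^^ Suc k) u = (s ^^ k) (s u)" for u by (simp only: funpow_Suc_right o_apply)
    have "(s ^^ Suc k) (Y ((s ^^ Suc k) p)) = (s ^^ k) (s (Y (s ((s ^^ k) p))))"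
      by (simp only: e1, simp only: e2)
    also have "\<dots> = (s ^^ k) (Y ((s ^^ k) p))" using sYs by simp
    finally show ?case using Suc by simp
  qed
  have Xid: "(s ^^ Suc k) (X ((s ^^ k) p)) = p" for k
  proof (induction k)
    case 0 thus ?case using Yp XX by (simp add: s_def)
  next
    case (Suc k)
    have e1: "(s ^^ Suc k) p = s ((s ^^ k) p)" by simp
    have e2: "(s ^^ Suc (Suc k)) u = (s ^^ Suc k) (s u)" for u by (simp only: funpow_Suc_right o_apply)
    have "(s ^^ Suc (Suc k)) (X ((s ^^ Suc k) p)) = (s ^^ Suc k) (s (X (s ((s ^^ k) p))))"
      by (simp only: e1, simp only: e2)
    also have "\<dots> = (s ^^ Suc k) (X ((s ^^ k) p))" using sXs by simp
    finally show ?case using Suc by simp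
  qed
  define Ob where "Ob = range (\<lambda>k. (s ^^ k) p)"
  have inO: "(s ^^ k) p \<in> Ob" for k unfolding Ob_def by auto
  have Yc: "Y ((s ^^ k) p) = (s ^^ (n - k mod n)) p" for k
  proof -
    have "(s ^^ k) ((s ^^ (n - k mod n)) p) = (s ^^ (k + (n - k mod n))) p"
      by (simp add: funpow_add)
    also have "\<dots> = p" unfolding per
    proof -
      have "k mod n < n" using n(1) by simp
      moreover have "n * (k div n) + k mod n = k" by simp
      ultimately have "k + (n - k mod n) = n * (k div n) + n" by linarith
      thus "n dvd k + (n - k mod n)" by simp
    qed
    finally show ?thesis using Yid[of k] injk[of k] by (metis injD)
  qed
  have Xc: "X ((s ^^ k) p) = (s ^^ (n - Suc k mod n)) p" for k
  proof -
    have "(s ^^ Suc k) ((s ^^ (n - Suc k mod n)) p) = (s ^^ (Suc k + (n - Suc k mod n))) p"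
      by (simp only: funpow_add o_apply)
    also have "\<dots> = p" unfolding per
    proof -
      have "Suc k mod n < n" using n(1) by simp
      moreover have "n * (Suc k div n) + Suc k mod n = Suc k" by (rule mult_div_mod_eq)
      ultimately have "Suc k + (n - Suc k mod n) = n * (Suc k div n) + n" by linarith
      thus "n dvd Suc k + (n - Suc k mod n)" by simp
    qed
    finally show ?thesis using Xid[of k] injk[of "Suc k"] by (metis injD)
  qed
  have clO: "\<forall>v\<in>Ob. X v \<in> Ob \<and> Y v \<in> Ob" unfolding Ob_def using Xc Yc by auto
  define q where "q = (s ^^ (n div 2)) p"
  have sp: "s p \<noteq> p"
  proof
    assume "s p = p" hence "Y (X p) = p" by (simp add: s_def)
    hence "X p = Y p" using YY by metis
    thus False using Xp Yp by simp
  qed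
  have n2: "n \<ge> 2"
  proof (rule ccontr)
    assume "\<not> n \<ge> 2" hence "n = 1" using n(1) by simp
    thus False using n(2) sp by simp
  qed
  have qp: "q \<noteq> p" unfolding q_def per
  proof (rule nat_dvd_not_less)
    show "0 < n div 2" using n2 by simp
    show "n div 2 < n" using n2 by simp
  qed
  have fixY: "Y ((s ^^ k) p) = (s ^^ k) p \<longleftrightarrow> n dvd 2 * k" for k
  proof -
    have "Y ((s ^^ k) p) = (s ^^ k) p \<longleftrightarrow> (s ^^ k) ((s ^^ k) p) = p"
      using Yid[of k] injk[of k] by (metis injD)
    also have "(s ^^ k) ((s ^^ k) p) = (s ^^ (k + k)) p" by (simp only: funpow_add o_apply)
    also have "(s ^^ (k + k)) p = p \<longleftrightarrow> n dvd 2 * k" unfolding per by (simp add: mult_2)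
    finally show ?thesis .
  qed
  have fixX: "X ((s ^^ k) p) = (s ^^ k) p \<longleftrightarrow> n dvd 2 * k + 1" for k
  proof -
    have "X ((s ^^ k) p) = (s ^^ k) p \<longleftrightarrow> (s ^^ Suc k) ((s ^^ k) p) = p"
      using Xid[of k] injk[of "Suc k"] by (metis injD)
    also have "(s ^^ Suc k) ((s ^^ k) p) = (s ^^ (Suc k + k)) p" by (simp only: funpow_add o_apply)
    also have "(s ^^ (Suc k + k)) p = p \<longleftrightarrow> n dvd 2 * k + 1" unfolding per by (simp add: mult_2)
    finally show ?thesis .
  qed
  have qfix: "X q = q \<or> Y q = q"
  proof (cases "even n")
    case True
    hence "n dvd 2 * (n div 2)" by simp
    thus ?thesis unfolding q_def using fixY by blast
  next
    case False
    hence "2 * (n div 2) + 1 = n" by presburger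
    hence "n dvd 2 * (n div 2) + 1" by simp
    thus ?thesis unfolding q_def using fixX by blast
  qed
  have qnb: "\<not> (X q = q \<and> Y q = q)"
  proof
    assume "X q = q \<and> Y q = q"
    hence "s q = q" by (simp add: s_def)
    hence "(s ^^ (n div 2)) (s p) = (s ^^ (n div 2)) p"
      unfolding q_def by (simp add: funpow_swap1)
    thus False using injk sp by (metis injD)
  qed
  have ends: "\<forall>v\<in>Ob. (X v = v \<or> Y v = v) \<longrightarrow> v = p \<or> v = q"
  proof (intro ballI impI)
    fix v assume "v \<in> Ob" and fx: "X v = v \<or> Y v = v"
    then obtain k where vk: "v = (s ^^ k) p" unfolding Ob_def by auto
    define k' where "k' = k mod n"
    have v': "v = (s ^^ k') p" using vk red k'_def by simp
    have k'n: "k' < n" using n(1) k'_def by simp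
    from fx v' have "n dvd 2 * k' \<or> n dvd 2 * k' + 1" using fixX fixY by auto
    hence "k' = 0 \<or> k' = n div 2"
    proof
      assume d: "n dvd 2 * k'"
      then obtain t where "2 * k' = n * t" by auto
      moreover have "2 * k' < 2 * n" using k'n by simp
      ultimately have "t < 2"
      proof -
        assume a1: "2 * k' = n * t" and a2: "2 * k' < 2 * n"
        show "t < 2"
        proof (rule ccontr)
          assume "\<not> t < 2" hence "n * 2 \<le> n * t" by simp
          thus False using a1 a2 by linarith
        qed
      qed
      hence "t = 0 \<or> t = 1" by auto
      thus ?thesis using \<open>2 * k' = n * t\<close> by auto
    next
      assume d: "n dvd 2 * k' + 1"
      then obtain t where "2 * k' + 1 = n * t" by auto
      moreover have "2 * k' + 1 < 2 * n" using k'n by simp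
      ultimately have "t < 2"
      proof -
        assume a1: "2 * k' + 1 = n * t" and a2: "2 * k' + 1 < 2 * n"
        show "t < 2"
        proof (rule ccontr)
          assume "\<not> t < 2" hence "n * 2 \<le> n * t" by simp
          thus False using a1 a2 by linarith
        qed
      qed
      hence "t = 0 \<or> t = 1" by auto
      thus ?thesis using \<open>2 * k' + 1 = n * t\<close> by auto
    qed
    thus "v = p \<or> v = q" using v' q_def by auto
  qed
  have "p \<in> Ob" using inO[of 0] by simp
  moreover have "q \<in> Ob" using inO q_def by simp
  ultimately show ?thesis using qp qfix qnb clO ends by blast
qed



definition oth :: "('e \<Rightarrow> 'v \<times> 'v) \<Rightarrow> 'e \<Rightarrow> 'v \<Rightarrow> 'v" where
  "oth ep e v = (if fst (ep e) = v then snd (ep e) else fst (ep e))"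

definition proper_on :: "'e set \<Rightarrow> ('e \<Rightarrow> 'v \<times> 'v) \<Rightarrow> ('e \<Rightarrow> nat) \<Rightarrow> bool" where
  "proper_on F ep c \<longleftrightarrow> (\<forall>e\<in>F. \<forall>f\<in>F. e \<noteq> f \<and> ends ep e \<inter> ends ep f \<noteq> {} \<longrightarrow> c e \<noteq> c f)"

definition hasc :: "'e set \<Rightarrow> ('e \<Rightarrow> 'v \<times> 'v) \<Rightarrow> ('e \<Rightarrow> nat) \<Rightarrow> nat \<Rightarrow> 'v \<Rightarrow> bool" where
  "hasc F ep c k v \<longleftrightarrow> (\<exists>e\<in>F. c e = k \<and> v \<in> ends ep e)"

definition edc :: "'e set \<Rightarrow> ('e \<Rightarrow> 'v \<times> 'v) \<Rightarrow> ('e \<Rightarrow> nat) \<Rightarrow> nat \<Rightarrow> 'v \<Rightarrow> 'e" where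
  "edc F ep c k v = (SOME e. e \<in> F \<and> c e = k \<and> v \<in> ends ep e)"

definition mv :: "'e set \<Rightarrow> ('e \<Rightarrow> 'v \<times> 'v) \<Rightarrow> ('e \<Rightarrow> nat) \<Rightarrow> nat \<Rightarrow> 'v \<Rightarrow> 'v" where
  "mv F ep c k v = (if hasc F ep c k v then oth ep (edc F ep c k v) v else v)"

definition sw :: "nat \<Rightarrow> nat \<Rightarrow> nat \<Rightarrow> nat" where
  "sw a b k = (if k = a then b else if k = b then a else k)"

definition is_end :: "'e set \<Rightarrow> ('e \<Rightarrow> 'v \<times> 'v) \<Rightarrow> ('e \<Rightarrow> nat) \<Rightarrow> nat \<Rightarrow> nat \<Rightarrow> 'v \<Rightarrow> bool" where
  "is_end F ep c a b v \<longleftrightarrow> (hasc F ep c a v \<noteq> hasc F ep c b v)"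

lemma oth_ends: "v \<in> ends ep e \<Longrightarrow> ends ep e = {v, oth ep e v}"
  unfolding ends_def oth_def by auto

lemma oth_in: "oth ep e v \<in> ends ep e"
  unfolding ends_def oth_def by auto

lemma oth_ne: "\<not> is_loop ep e \<Longrightarrow> v \<in> ends ep e \<Longrightarrow> oth ep e v \<noteq> v"
  unfolding ends_def oth_def is_loop_def by auto

lemma oth_oth: "v \<in> ends ep e \<Longrightarrow> oth ep e (oth ep e v) = v"
  unfolding ends_def oth_def by auto

lemma proper_uniq:
  assumes "proper_on F ep c" "e \<in> F" "f \<in> F" "c e = c f" "v \<in> ends ep e" "v \<in> ends ep f"
  shows "e = f"
  using assms unfolding proper_on_def by blast

lemma edc_prop:
  assumes "hasc F ep c k v"
  shows "edc F ep c k v \<in> F \<and> c (edc F ep c k v) = k \<and> v \<in> ends ep (edc F ep c k v)"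
  using assms unfolding hasc_def edc_def by (metis (mono_tags, lifting) someI_ex)

lemma edc_eq:
  assumes "proper_on F ep c" "e \<in> F" "c e = k" "v \<in> ends ep e"
  shows "edc F ep c k v = e"
proof -
  have h: "hasc F ep c k v" using assms unfolding hasc_def by blast
  have "edc F ep c k v \<in> F" "c (edc F ep c k v) = k" "v \<in> ends ep (edc F ep c k v)" using edc_prop[OF h] by auto
  thus ?thesis using proper_uniq[OF assms(1) _ assms(2), of "edc F ep c k v" v] assms by simp
qed

lemma mv_edge:
  assumes "proper_on F ep c" "e \<in> F" "c e = k" "v \<in> ends ep e"
  shows "mv F ep c k v = oth ep e v"
proof -
  have h: "hasc F ep c k v" using assms unfolding hasc_def by blast
  show ?thesis unfolding mv_def using h edc_eq[OF assms] by simp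
qed

lemma mv_mv:
  assumes pr: "proper_on F ep c"
  shows "mv F ep c k (mv F ep c k v) = v"
proof (cases "hasc F ep c k v")
  case True
  define e where "e = edc F ep c k v"
  have e: "e \<in> F" "c e = k" "v \<in> ends ep e" using edc_prop[OF True] e_def by auto
  have m1: "mv F ep c k v = oth ep e v" using mv_edge[OF pr e] .
  have "oth ep e v \<in> ends ep e" by (rule oth_in)
  hence "mv F ep c k (oth ep e v) = oth ep e (oth ep e v)" using mv_edge[OF pr e(1,2)] by simp
  thus ?thesis using m1 oth_oth[OF e(3)] by simp
next
  case False
  thus ?thesis unfolding mv_def by simp
qed

lemma mv_fix:
  assumes pr: "proper_on F ep c" and nl: "\<forall>e\<in>F. \<not> is_loop ep e"
  shows "mv F ep c k v = v \<longleftrightarrow> \<not> hasc F ep c k v"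
proof (cases "hasc F ep c k v")
  case True
  define e where "e = edc F ep c k v"
  have e: "e \<in> F" "c e = k" "v \<in> ends ep e" using edc_prop[OF True] e_def by auto
  have "mv F ep c k v = oth ep e v" using mv_edge[OF pr e] .
  moreover have "oth ep e v \<noteq> v" using oth_ne[OF _ e(3)] nl e(1) by simp
  ultimately show ?thesis using True by simp
next
  case False
  thus ?thesis unfolding mv_def by simp
qed

lemma kempe:
  assumes finF: "finite F" and nl: "\<forall>e\<in>F. \<not> is_loop ep e" and pr: "proper_on F ep c"
    and ab: "a \<noteq> b" and pa: "hasc F ep c a p" and pb: "\<not> hasc F ep c b p"
  shows "\<exists>c' Ob q. proper_on F ep c' \<and> (\<forall>e\<in>F. \<forall>v\<in>ends ep e. c' e = (if v \<in> Ob then sw a b (c e) else c e))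
     \<and> p \<in> Ob \<and> q \<in> Ob \<and> q \<noteq> p \<and> is_end F ep c a b q \<and> (\<forall>v\<in>Ob. is_end F ep c a b v \<longrightarrow> v = p \<or> v = q)"
proof -
  define X where "X = mv F ep c a"
  define Y where "Y = mv F ep c b"
  define S where "S = insert p (\<Union>e\<in>F. ends ep e)"
  have XX: "\<And>v. X (X v) = v" unfolding X_def using mv_mv[OF pr] by blast
  have YY: "\<And>v. Y (Y v) = v" unfolding Y_def using mv_mv[OF pr] by blast
  have Xf: "\<And>v. X v = v \<longleftrightarrow> \<not> hasc F ep c a v" unfolding X_def using mv_fix[OF pr nl] by blast
  have Yf: "\<And>v. Y v = v \<longleftrightarrow> \<not> hasc F ep c b v" unfolding Y_def using mv_fix[OF pr nl] by blast
  have finS: "finite S" unfolding S_def ends_def using finF by auto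
  have clk: "mv F ep c k v \<in> S" if "v \<in> S" for k v
  proof (cases "hasc F ep c k v")
    case True
    have e: "edc F ep c k v \<in> F" using edc_prop[OF True] by blast
    have "oth ep (edc F ep c k v) v \<in> (\<Union>e\<in>F. ends ep e)" using oth_in e by (rule UN_I[rotated])
    hence "oth ep (edc F ep c k v) v \<in> S" unfolding S_def by simp
    thus ?thesis unfolding mv_def using True by simp
  next
    case False thus ?thesis using that unfolding mv_def by simp
  qed
  have cl: "\<And>v. v \<in> S \<Longrightarrow> X v \<in> S \<and> Y v \<in> S" unfolding X_def Y_def using clk by blast
  have pS: "p \<in> S" unfolding S_def by simp
  have Yp: "Y p = p" using Yf pb by blast
  have Xp: "X p \<noteq> p" using Xf pa by blast
  obtain Ob q where O: "p \<in> Ob" "q \<in> Ob" "q \<noteq> p" "X q = q \<or> Y q = q" "\<not> (X q = q \<and> Y q = q)"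
     "\<forall>v\<in>Ob. X v \<in> Ob \<and> Y v \<in> Ob" "\<forall>v\<in>Ob. (X v = v \<or> Y v = v) \<longrightarrow> v = p \<or> v = q"
    using orbit2[OF XX YY Yp Xp finS cl pS] by blast
  define c' where "c' e = (if c e \<in> {a, b} \<and> fst (ep e) \<in> Ob then sw a b (c e) else c e)" for e
  have key: "c' e = (if v \<in> Ob then sw a b (c e) else c e)" if e: "e \<in> F" "v \<in> ends ep e" for e v
  proof (cases "c e \<in> {a, b}")
    case False
    thus ?thesis unfolding c'_def sw_def by auto
  next
    case True
    have fe: "fst (ep e) \<in> ends ep e" unfolding ends_def by simp
    have "fst (ep e) \<in> Ob \<longleftrightarrow> v \<in> Ob"
    proof -
      have m: "mv F ep c (c e) u = oth ep e u" if "u \<in> ends ep e" for u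
        using mv_edge[OF pr e(1) refl that] .
      have XYO: "mv F ep c (c e) u \<in> Ob" if "u \<in> Ob" for u
        using True O(6) that unfolding X_def Y_def by auto
      show ?thesis
      proof
        assume "fst (ep e) \<in> Ob"
        hence "oth ep e (fst (ep e)) \<in> Ob" using XYO m fe by metis
        moreover have "v = fst (ep e) \<or> v = oth ep e (fst (ep e))" using e(2) oth_ends[OF fe] by blast
        ultimately show "v \<in> Ob" using \<open>fst (ep e) \<in> Ob\<close> by auto
      next
        assume "v \<in> Ob"
        hence "oth ep e v \<in> Ob" using XYO m e(2) by metis
        moreover have "fst (ep e) = v \<or> fst (ep e) = oth ep e v" using fe oth_ends[OF e(2)] by blast
        ultimately show "fst (ep e) \<in> Ob" using \<open>v \<in> Ob\<close> by auto
      qed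
    qed
    thus ?thesis unfolding c'_def using True by simp
  qed
  have swinj: "sw a b x = sw a b y \<Longrightarrow> x = y" for x y unfolding sw_def by (auto split: if_splits)
  have prc: "proper_on F ep c'"
    unfolding proper_on_def
  proof (intro ballI impI)
    fix e f assume ef: "e \<in> F" "f \<in> F" "e \<noteq> f \<and> ends ep e \<inter> ends ep f \<noteq> {}"
    then obtain v where v: "v \<in> ends ep e" "v \<in> ends ep f" by blast
    have "c e \<noteq> c f" using pr ef unfolding proper_on_def by blast
    thus "c' e \<noteq> c' f" using key[OF ef(1) v(1)] key[OF ef(2) v(2)] swinj by auto
  qed
  have endi: "is_end F ep c a b v \<longleftrightarrow> (X v = v \<or> Y v = v) \<and> \<not> (X v = v \<and> Y v = v)" for v
    unfolding is_end_def using Xf Yf by blast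
  have qe: "is_end F ep c a b q" using endi O(4,5) by blast
  have oe: "\<forall>v\<in>Ob. is_end F ep c a b v \<longrightarrow> v = p \<or> v = q" using endi O(7) by blast
  have kk: "\<forall>e\<in>F. \<forall>v\<in>ends ep e. c' e = (if v \<in> Ob then sw a b (c e) else c e)" using key by blast
  show ?thesis
    apply (rule exI[of _ c'], rule exI[of _ Ob], rule exI[of _ q])
    using prc kk O(1,2,3) qe oe by simp
qed



definition one3 :: "bool \<Rightarrow> bool \<Rightarrow> bool \<Rightarrow> bool" where
  "one3 a b c \<longleftrightarrow> (a \<and> \<not> b \<and> \<not> c) \<or> (\<not> a \<and> b \<and> \<not> c) \<or> (\<not> a \<and> \<not> b \<and> c)"

lemma cc_one: "cover_count (M1, M2, M3) e = 1 \<longleftrightarrow> one3 (e \<in> M1) (e \<in> M2) (e \<in> M3)"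
  unfolding cover_count_def one3_def by auto

lemma pm_one:
  assumes "perfect_matching V E ep M" "v \<in> V" "{e\<in>E. v \<in> ends ep e} = {a, b, c}"
    "a \<noteq> b" "a \<noteq> c" "b \<noteq> c"
  shows "one3 (a \<in> M) (b \<in> M) (c \<in> M)"
proof -
  have ME: "M \<subseteq> E" using assms(1) unfolding perfect_matching_def by simp
  have "card {e\<in>M. v \<in> ends ep e} = 1" using assms(1,2) unfolding perfect_matching_def by simp
  moreover have "{e\<in>M. v \<in> ends ep e} = M \<inter> {a, b, c}" using ME assms(3) by blast
  ultimately have "card (M \<inter> {a, b, c}) = 1" by simp
  thus ?thesis using assms(4-6) unfolding one3_def
    by (cases "a \<in> M"; cases "b \<in> M"; cases "c \<in> M") (auto simp: card_insert_if)
qed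

lemma pm_two:
  assumes "perfect_matching V E ep M" "v \<in> V" "e \<in> M" "f \<in> M" "v \<in> ends ep e" "v \<in> ends ep f"
  shows "e = f"
proof -
  have "card {e\<in>M. v \<in> ends ep e} = 1" using assms(1,2) unfolding perfect_matching_def by simp
  then obtain x where x: "{e\<in>M. v \<in> ends ep e} = {x}" by (rule card_1_singletonE)
  have "e \<in> {e\<in>M. v \<in> ends ep e}" "f \<in> {e\<in>M. v \<in> ends ep e}" using assms(3-6) by auto
  thus ?thesis unfolding x by simp
qed

definition d3 :: "nat \<Rightarrow> nat \<Rightarrow> nat \<Rightarrow> bool" where
  "d3 a b c \<longleftrightarrow> a \<noteq> b \<and> a \<noteq> c \<and> b \<noteq> c"

lemma all_colours:
  assumes "finite I" "card I = 3" "\<forall>e\<in>I. \<forall>f\<in>I. e \<noteq> f \<longrightarrow> c e \<noteq> c f" "\<forall>e\<in>I. c e < (3::nat)" "k < 3"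
  shows "\<exists>e\<in>I. c e = k"
proof -
  have inj: "inj_on c I" using assms(3) unfolding inj_on_def by blast
  have "card (c ` I) = 3" using card_image[OF inj] assms(2) by simp
  moreover have "c ` I \<subseteq> {0, 1, 2}" using assms(4) by auto
  ultimately have "c ` I = {0, 1, 2}" by (intro card_subset_eq) auto
  thus ?thesis using assms(5) by (metis image_iff insertCI less_Suc_eq numeral_3_eq_3 One_nat_def less_one numeral_2_eq_2 empty_iff insertE)
qed

locale hexctx =
  fixes V :: "'v set" and E :: "'e set" and ep :: "'e \<Rightarrow> 'v \<times> 'v" and M1 M2 M3 :: "'e set"
    and h0 h1 h2 h3 h4 h5 w :: 'v and e0 e1 e2 e3 e4 e5 f0 f1 f2 f3 f4 f5 g :: 'e
  assumes finE: "finite E"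
    and inV: "\<forall>e\<in>E. fst (ep e) \<in> V \<and> snd (ep e) \<in> V"
    and nl: "\<forall>e\<in>E. \<not> is_loop ep e"
    and inc3: "\<forall>v\<in>V. card {e\<in>E. v \<in> ends ep e} = 3"
    and pm1: "perfect_matching V E ep M1" and pm2: "perfect_matching V E ep M2"
    and pm3: "perfect_matching V E ep M3"
    and ncol: "\<not> three_edge_colourable E ep"
    and dv: "distinct [h0, h1, h2, h3, h4, h5, w]"
    and hV: "h0 \<in> V" "h1 \<in> V" "h2 \<in> V" "h3 \<in> V" "h4 \<in> V" "h5 \<in> V" "w \<in> V"
    and inE: "e0 \<in> E" "e1 \<in> E" "e2 \<in> E" "e3 \<in> E" "e4 \<in> E" "e5 \<in> E"
       "f0 \<in> E" "f1 \<in> E" "f2 \<in> E" "f3 \<in> E" "f4 \<in> E" "f5 \<in> E" "g \<in> E"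
    and en: "ends ep e0 = {h0, h1}" "ends ep e1 = {h1, h2}" "ends ep e2 = {h2, h3}"
       "ends ep e3 = {h3, h4}" "ends ep e4 = {h4, h5}" "ends ep e5 = {h5, h0}"
       "ends ep f0 = {h0, w}" "ends ep f1 = {h1, w}"
    and ic: "{e\<in>E. h0 \<in> ends ep e} = {e0, e5, f0}" "{e\<in>E. h1 \<in> ends ep e} = {e0, e1, f1}"
       "{e\<in>E. h2 \<in> ends ep e} = {e1, e2, f2}" "{e\<in>E. h3 \<in> ends ep e} = {e2, e3, f3}"
       "{e\<in>E. h4 \<in> ends ep e} = {e3, e4, f4}" "{e\<in>E. h5 \<in> ends ep e} = {e4, e5, f5}"
       "{e\<in>E. w \<in> ends ep e} = {f0, f1, g}"
    and fn: "f2 \<notin> {e1, e2}" "f3 \<notin> {e2, e3}" "f4 \<notin> {e3, e4}" "f5 \<notin> {e4, e5}" "g \<notin> {f0, f1}"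
    and core: "\<forall>e\<in>E. cover_count (M1, M2, M3) e \<noteq> 1 \<longleftrightarrow> e \<in> {e0, e1, e2, e3, e4, e5}"
begin

definition F where "F = E - {e0, e1, e2, e3, e4, e5, f0, f1}"

lemma hdist: "h0 \<noteq> h1" "h0 \<noteq> h2" "h0 \<noteq> h3" "h0 \<noteq> h4" "h0 \<noteq> h5" "h0 \<noteq> w"
  "h1 \<noteq> h2" "h1 \<noteq> h3" "h1 \<noteq> h4" "h1 \<noteq> h5" "h1 \<noteq> w"
  "h2 \<noteq> h3" "h2 \<noteq> h4" "h2 \<noteq> h5" "h2 \<noteq> w"
  "h3 \<noteq> h4" "h3 \<noteq> h5" "h3 \<noteq> w" "h4 \<noteq> h5" "h4 \<noteq> w" "h5 \<noteq> w"
  using dv by auto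

lemma finc: "h2 \<in> ends ep f2" "h3 \<in> ends ep f3" "h4 \<in> ends ep f4" "h5 \<in> ends ep f5" "w \<in> ends ep g"
  using ic by blast+

lemma edist: "e0 \<noteq> e1" "e0 \<noteq> e2" "e0 \<noteq> e3" "e0 \<noteq> e4" "e0 \<noteq> e5"
  "e1 \<noteq> e2" "e1 \<noteq> e3" "e1 \<noteq> e4" "e1 \<noteq> e5" "e2 \<noteq> e3" "e2 \<noteq> e4" "e2 \<noteq> e5"
  "e3 \<noteq> e4" "e3 \<noteq> e5" "e4 \<noteq> e5" "f0 \<noteq> f1"
  "f0 \<notin> {e0, e1, e2, e3, e4, e5}" "f1 \<notin> {e0, e1, e2, e3, e4, e5}"
  using en hdist by (auto simp: doubleton_eq_iff)

lemma fnot: "f2 \<notin> {e0, e1, e2, e3, e4, e5, f0, f1}" "f3 \<notin> {e0, e1, e2, e3, e4, e5, f0, f1}"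
  "f4 \<notin> {e0, e1, e2, e3, e4, e5, f0, f1}" "f5 \<notin> {e0, e1, e2, e3, e4, e5, f0, f1}"
  "g \<notin> {e0, e1, e2, e3, e4, e5, f0, f1}"
  using en hdist fn finc by (auto simp: doubleton_eq_iff)

lemma inF: "f2 \<in> F" "f3 \<in> F" "f4 \<in> F" "f5 \<in> F" "g \<in> F"
  using fnot inE unfolding F_def by auto

lemma incF: "{e\<in>F. h0 \<in> ends ep e} = {}" "{e\<in>F. h1 \<in> ends ep e} = {}"
  "{e\<in>F. h2 \<in> ends ep e} = {f2}" "{e\<in>F. h3 \<in> ends ep e} = {f3}"
  "{e\<in>F. h4 \<in> ends ep e} = {f4}" "{e\<in>F. h5 \<in> ends ep e} = {f5}"
  "{e\<in>F. w \<in> ends ep e} = {g}"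
  using ic inF unfolding F_def by auto

lemma incO:
  assumes "v \<notin> {h0, h1, h2, h3, h4, h5, w}"
  shows "{e\<in>F. v \<in> ends ep e} = {e\<in>E. v \<in> ends ep e}"
  using assms en unfolding F_def by auto

lemma finF: "finite F" unfolding F_def using finE by simp
lemma nlF: "\<forall>e\<in>F. \<not> is_loop ep e" unfolding F_def using nl by simp

lemma vx:
  assumes "perfect_matching V E ep M"
  shows "one3 (e0 \<in> M) (e5 \<in> M) (f0 \<in> M)" "one3 (e0 \<in> M) (e1 \<in> M) (f1 \<in> M)"
    "one3 (e1 \<in> M) (e2 \<in> M) (f2 \<in> M)" "one3 (e2 \<in> M) (e3 \<in> M) (f3 \<in> M)"
    "one3 (e3 \<in> M) (e4 \<in> M) (f4 \<in> M)" "one3 (e4 \<in> M) (e5 \<in> M) (f5 \<in> M)"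
    "one3 (f0 \<in> M) (f1 \<in> M) (g \<in> M)"
  using pm_one[OF assms hV(1) ic(1)] pm_one[OF assms hV(2) ic(2)] pm_one[OF assms hV(3) ic(3)]
    pm_one[OF assms hV(4) ic(4)] pm_one[OF assms hV(5) ic(5)] pm_one[OF assms hV(6) ic(6)]
    pm_one[OF assms hV(7) ic(7)] edist fnot fn by auto

lemma ccs:
  "one3 (f0 \<in> M1) (f0 \<in> M2) (f0 \<in> M3)" "one3 (f1 \<in> M1) (f1 \<in> M2) (f1 \<in> M3)"
  "one3 (f2 \<in> M1) (f2 \<in> M2) (f2 \<in> M3)" "one3 (f3 \<in> M1) (f3 \<in> M2) (f3 \<in> M3)"
  "one3 (f4 \<in> M1) (f4 \<in> M2) (f4 \<in> M3)" "one3 (f5 \<in> M1) (f5 \<in> M2) (f5 \<in> M3)"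
  "one3 (g \<in> M1) (g \<in> M2) (g \<in> M3)"
  "\<not> one3 (e0 \<in> M1) (e0 \<in> M2) (e0 \<in> M3)" "\<not> one3 (e1 \<in> M1) (e1 \<in> M2) (e1 \<in> M3)"
  "\<not> one3 (e2 \<in> M1) (e2 \<in> M2) (e2 \<in> M3)" "\<not> one3 (e3 \<in> M1) (e3 \<in> M2) (e3 \<in> M3)"
  "\<not> one3 (e4 \<in> M1) (e4 \<in> M2) (e4 \<in> M3)" "\<not> one3 (e5 \<in> M1) (e5 \<in> M2) (e5 \<in> M3)"
  using core inE edist fnot unfolding cc_one[symmetric] by auto

lemma atoms:
  "e0 \<notin> M1" "e0 \<notin> M2" "e0 \<notin> M3" "e2 \<notin> M1" "e2 \<notin> M2" "e2 \<notin> M3"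
  "e4 \<notin> M1" "e4 \<notin> M2" "e4 \<notin> M3"
  "e1 \<in> M1 \<or> e1 \<in> M2 \<or> e1 \<in> M3" "e3 \<in> M1 \<or> e3 \<in> M2 \<or> e3 \<in> M3"
  "e5 \<in> M1 \<or> e5 \<in> M2 \<or> e5 \<in> M3"
  "f1 \<in> M1 \<longleftrightarrow> f2 \<in> M1" "f1 \<in> M2 \<longleftrightarrow> f2 \<in> M2" "f1 \<in> M3 \<longleftrightarrow> f2 \<in> M3"
  "f3 \<in> M1 \<longleftrightarrow> f4 \<in> M1" "f3 \<in> M2 \<longleftrightarrow> f4 \<in> M2" "f3 \<in> M3 \<longleftrightarrow> f4 \<in> M3"
  "f5 \<in> M1 \<longleftrightarrow> f0 \<in> M1" "f5 \<in> M2 \<longleftrightarrow> f0 \<in> M2" "f5 \<in> M3 \<longleftrightarrow> f0 \<in> M3"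
  using vx[OF pm1] vx[OF pm2] vx[OF pm3] ccs unfolding one3_def by smt+

definition col :: "'e \<Rightarrow> nat" where
  "col e = (if e \<in> M1 then 0 else if e \<in> M2 then 1 else 2)"

lemma F_one: "e \<in> F \<Longrightarrow> one3 (e \<in> M1) (e \<in> M2) (e \<in> M3)"
  using core unfolding F_def cc_one[symmetric] by auto

lemma FE: "F \<subseteq> E" unfolding F_def by auto

lemma col_lt: "col e < 3" unfolding col_def by auto

lemma col_proper: "proper_on F ep col"
  unfolding proper_on_def
proof (intro ballI impI notI)
  fix e f assume ef: "e \<in> F" "f \<in> F" "e \<noteq> f \<and> ends ep e \<inter> ends ep f \<noteq> {}" and cc: "col e = col f"
  then obtain v where v: "v \<in> ends ep e" "v \<in> ends ep f" by blast
  have vV: "v \<in> V" using v(1) ef(1) FE inV unfolding ends_def by auto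
  have o1: "one3 (e \<in> M1) (e \<in> M2) (e \<in> M3)" "one3 (f \<in> M1) (f \<in> M2) (f \<in> M3)"
    using F_one ef by auto
  have "(e \<in> M1 \<and> f \<in> M1) \<or> (e \<in> M2 \<and> f \<in> M2) \<or> (e \<in> M3 \<and> f \<in> M3)"
    using o1 cc unfolding one3_def col_def by (auto split: if_splits)
  thus False using pm_two[OF pm1 vV _ _ v] pm_two[OF pm2 vV _ _ v] pm_two[OF pm3 vV _ _ v] ef by blast
qed

lemma col_facts: "col f1 = col f2" "col f3 = col f4" "col f5 = col f0"
  "col f0 \<noteq> col f1" "col f0 \<noteq> col g" "col f1 \<noteq> col g"
proof -
  show "col f1 = col f2" "col f3 = col f4" "col f5 = col f0" using atoms unfolding col_def by auto
  show "col f0 \<noteq> col f1" "col f0 \<noteq> col g" "col f1 \<noteq> col g"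
    using vx(7)[OF pm1] vx(7)[OF pm2] vx(7)[OF pm3] ccs(1,2,7) unfolding col_def one3_def by auto
qed

lemma covered: "e \<in> E \<Longrightarrow> e \<notin> {e0, e2, e4} \<Longrightarrow> e \<in> M1 \<or> e \<in> M2 \<or> e \<in> M3"
proof -
  assume e: "e \<in> E" "e \<notin> {e0, e2, e4}"
  show ?thesis
  proof (cases "e \<in> {e0, e1, e2, e3, e4, e5}")
    case True thus ?thesis using e atoms by auto
  next
    case False
    hence "cover_count (M1, M2, M3) e = 1" using core e by auto
    thus ?thesis unfolding cc_one one3_def by auto
  qed
qed

lemma incN: "N \<subseteq> E \<Longrightarrow> {e\<in>N. v \<in> ends ep e} = N \<inter> {e\<in>E. v \<in> ends ep e}" by auto

lemma other_all:
  assumes pr: "proper_on F ep c" and lt: "\<forall>e\<in>F. c e < 3" and v: "v \<in> V" "v \<notin> {h0, h1, h2, h3, h4, h5, w}"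
    and k: "k < 3"
  shows "\<exists>e\<in>F. v \<in> ends ep e \<and> c e = k"
proof -
  let ?I = "{e\<in>F. v \<in> ends ep e}"
  have I: "?I = {e\<in>E. v \<in> ends ep e}" using incO[OF v(2)] .
  have "card ?I = 3" using I inc3 v(1) by simp
  moreover have "finite ?I" using finF by simp
  moreover have "\<forall>e\<in>?I. \<forall>f\<in>?I. e \<noteq> f \<longrightarrow> c e \<noteq> c f" using pr unfolding proper_on_def by blast
  moreover have "\<forall>e\<in>?I. c e < 3" using lt by blast
  ultimately have "\<exists>e\<in>?I. c e = k" using all_colours k by blast
  thus ?thesis by blast
qed

lemma good:
  assumes pr: "proper_on F ep c" and lt: "\<forall>e\<in>F. c e < 3"
    and ne: "c g \<noteq> c f2" "c g \<noteq> c f3" "c g \<noteq> c f4" "c g \<noteq> c f5"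
  shows "\<exists>N. perfect_matching V E ep N \<and> e0 \<in> N \<and> e2 \<in> N \<and> e4 \<in> N"
proof -
  define N where "N = {e\<in>F. c e = c g} \<union> {e0, e2, e4}"
  have NE: "N \<subseteq> E" unfolding N_def using FE inE by auto
  have mem: "e0 \<in> N" "e2 \<in> N" "e4 \<in> N" "e1 \<notin> N" "e3 \<notin> N" "e5 \<notin> N" "f0 \<notin> N" "f1 \<notin> N"
    "f2 \<notin> N" "f3 \<notin> N" "f4 \<notin> N" "f5 \<notin> N" "g \<in> N"
    unfolding N_def using edist fnot inF ne unfolding F_def by auto
  have one: "card {e\<in>N. v \<in> ends ep e} = 1" if vV: "v \<in> V" for v
  proof (cases "v \<in> {h0, h1, h2, h3, h4, h5, w}")
    case True
    then consider "v = h0" | "v = h1" | "v = h2" | "v = h3" | "v = h4" | "v = h5" | "v = w" by blast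
    thus ?thesis
    proof cases
      case 1 thus ?thesis using incN[OF NE] ic(1) mem by (simp add: Int_insert_right)
    next
      case 2 thus ?thesis using incN[OF NE] ic(2) mem by (simp add: Int_insert_right)
    next
      case 3 thus ?thesis using incN[OF NE] ic(3) mem by (simp add: Int_insert_right)
    next
      case 4 thus ?thesis using incN[OF NE] ic(4) mem by (simp add: Int_insert_right)
    next
      case 5 thus ?thesis using incN[OF NE] ic(5) mem by (simp add: Int_insert_right)
    next
      case 6 thus ?thesis using incN[OF NE] ic(6) mem by (simp add: Int_insert_right)
    next
      case 7 thus ?thesis using incN[OF NE] ic(7) mem by (simp add: Int_insert_right)
    qed
  next
    case False
    have cg: "c g < 3" using lt inF by auto
    obtain e where e: "e \<in> F" "v \<in> ends ep e" "c e = c g" using other_all[OF pr lt vV False cg] by blast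
    have "{e\<in>N. v \<in> ends ep e} = {e}"
    proof
      show "{e} \<subseteq> {e\<in>N. v \<in> ends ep e}" using e unfolding N_def by auto
      show "{e\<in>N. v \<in> ends ep e} \<subseteq> {e}"
      proof
        fix f assume f: "f \<in> {e\<in>N. v \<in> ends ep e}"
        have "f \<notin> {e0, e2, e4}" using f False en by auto
        hence "f \<in> F" "c f = c g" using f unfolding N_def by auto
        thus "f \<in> {e}" using proper_uniq[OF pr e(1) _ _ e(2), of f] e f by auto
      qed
    qed
    thus ?thesis by simp
  qed
  have "perfect_matching V E ep N"
    unfolding perfect_matching_def using NE nl one by blast
  thus ?thesis using mem by blast
qed

lemma contra:
  assumes pr: "proper_on F ep c" and lt: "\<forall>e\<in>F. c e < 3"
    and bd: "k0 < 3" "k1 < 3" "a0 < 3" "a1 < 3" "a2 < 3" "a3 < 3" "a4 < 3" "a5 < 3"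
    and d: "d3 a0 a5 k0" "d3 a0 a1 k1" "d3 a1 a2 (c f2)" "d3 a2 a3 (c f3)" "d3 a3 a4 (c f4)"
      "d3 a4 a5 (c f5)" "d3 k0 k1 (c g)"
  shows False
proof -
  define C where "C e = (if e = e0 then a0 else if e = e1 then a1 else if e = e2 then a2
     else if e = e3 then a3 else if e = e4 then a4 else if e = e5 then a5
     else if e = f0 then k0 else if e = f1 then k1 else c e)" for e
  have Cv: "C e0 = a0" "C e1 = a1" "C e2 = a2" "C e3 = a3" "C e4 = a4" "C e5 = a5" "C f0 = k0" "C f1 = k1"
    unfolding C_def using edist by auto
  have CF: "e \<in> F \<Longrightarrow> C e = c e" for e unfolding C_def F_def by auto
  have Cf: "C f2 = c f2" "C f3 = c f3" "C f4 = c f4" "C f5 = c f5" "C g = c g" using CF inF by auto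
  have lt3: "\<forall>e\<in>E. C e < 3"
  proof
    fix e assume "e \<in> E"
    show "C e < 3"
    proof (cases "e \<in> F")
      case True thus ?thesis using CF lt by auto
    next
      case False
      hence "e \<in> {e0, e1, e2, e3, e4, e5, f0, f1}" using \<open>e \<in> E\<close> unfolding F_def by auto
      thus ?thesis using Cv bd by auto
    qed
  qed
  have propC: "C e \<noteq> C f" if ef: "e \<in> E" "f \<in> E" "e \<noteq> f" "v \<in> ends ep e" "v \<in> ends ep f" for e f v
  proof (cases "v \<in> {h0, h1, h2, h3, h4, h5, w}")
    case True
    have ee: "e \<in> {e\<in>E. v \<in> ends ep e}" "f \<in> {e\<in>E. v \<in> ends ep e}" using ef by auto
    from True consider "v = h0" | "v = h1" | "v = h2" | "v = h3" | "v = h4" | "v = h5" | "v = w" by blast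
    thus ?thesis
    proof cases
      case 1 thus ?thesis using ee ic(1) ef(3) Cv Cf d(1) unfolding d3_def by auto
    next
      case 2 thus ?thesis using ee ic(2) ef(3) Cv Cf d(2) unfolding d3_def by auto
    next
      case 3 thus ?thesis using ee ic(3) ef(3) Cv Cf d(3) unfolding d3_def by auto
    next
      case 4 thus ?thesis using ee ic(4) ef(3) Cv Cf d(4) unfolding d3_def by auto
    next
      case 5 thus ?thesis using ee ic(5) ef(3) Cv Cf d(5) unfolding d3_def by auto
    next
      case 6 thus ?thesis using ee ic(6) ef(3) Cv Cf d(6) unfolding d3_def by auto
    next
      case 7 thus ?thesis using ee ic(7) ef(3) Cv Cf d(7) unfolding d3_def by auto
    qed
  next
    case False
    have "e \<in> F" "f \<in> F" using incO[OF False] ef by blast+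
    moreover have "c e \<noteq> c f" using pr calculation ef unfolding proper_on_def by blast
    ultimately show ?thesis using CF by simp
  qed
  have "three_edge_colourable E ep"
    unfolding three_edge_colourable_def
  proof (intro exI[of _ C] conjI ballI impI)
    fix e assume "e \<in> E" thus "C e < 3" "\<not> is_loop ep e" using lt3 nl by auto
  next
    fix e f assume "e \<in> E" "f \<in> E" "e \<noteq> f \<and> ends ep e \<inter> ends ep f \<noteq> {}"
    thus "C e \<noteq> C f" using propC by blast
  qed
  thus False using ncol by simp
qed

definition sedge :: "'v \<Rightarrow> 'e" where
  "sedge s = (if s = h2 then f2 else if s = h3 then f3 else if s = h4 then f4 else if s = h5 then f5 else g)"

lemma sedge_simps: "sedge h2 = f2" "sedge h3 = f3" "sedge h4 = f4" "sedge h5 = f5" "sedge w = g"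
  unfolding sedge_def using hdist by auto

lemma sedge_inc: "s \<in> {h2, h3, h4, h5, w} \<Longrightarrow> {e\<in>F. s \<in> ends ep e} = {sedge s}"
  using incF sedge_simps by auto

lemma hasc_s:
  assumes "s \<in> {h2, h3, h4, h5, w}" shows "hasc F ep c k s \<longleftrightarrow> c (sedge s) = k"
proof -
  have "hasc F ep c k s \<longleftrightarrow> (\<exists>e\<in>{e\<in>F. s \<in> ends ep e}. c e = k)" unfolding hasc_def by blast
  thus ?thesis using sedge_inc[OF assms] by simp
qed

lemma endcand:
  assumes pr: "proper_on F ep c" and lt: "\<forall>e\<in>F. c e < 3" and ab: "a < 3" "b < 3"
    and q: "is_end F ep c a b q"
  shows "q \<in> {h2, h3, h4, h5, w} \<and> c (sedge q) \<in> {a, b}"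
proof -
  have q2: "hasc F ep c a q \<or> hasc F ep c b q" using q unfolding is_end_def by blast
  have "q \<in> {h2, h3, h4, h5, w}"
  proof (rule ccontr)
    assume nq: "q \<notin> {h2, h3, h4, h5, w}"
    show False
    proof (cases "q \<in> {h0, h1}")
      case True
      hence "\<not> hasc F ep c k q" for k using incF(1,2) unfolding hasc_def by auto
      thus False using q2 by blast
    next
      case False
      hence nq': "q \<notin> {h0, h1, h2, h3, h4, h5, w}" using nq by auto
      have qV: "q \<in> V" using q2 FE inV unfolding hasc_def ends_def by auto
      have "hasc F ep c a q" "hasc F ep c b q"
        using other_all[OF pr lt qV nq' ab(1)] other_all[OF pr lt qV nq' ab(2)] unfolding hasc_def by auto
      thus False using q unfolding is_end_def by simp
    qed
  qed
  moreover have "c (sedge q) \<in> {a, b}" using q2 hasc_s[OF calculation] by auto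
  ultimately show ?thesis by blast
qed

lemma kstep:
  assumes pr: "proper_on F ep c" and lt: "\<forall>e\<in>F. c e < 3" and ab: "a < 3" "b < 3" "a \<noteq> b"
    and p: "p \<in> {h2, h3, h4, h5, w}" "c (sedge p) = a"
  shows "\<exists>c' q. proper_on F ep c' \<and> (\<forall>e\<in>F. c' e < 3) \<and> q \<in> {h2, h3, h4, h5, w} \<and> q \<noteq> p
    \<and> c (sedge q) \<in> {a, b} \<and> (\<forall>s\<in>{h2, h3, h4, h5, w}. c' (sedge s) =
        (if s \<in> {p, q} \<and> c (sedge s) \<in> {a, b} then sw a b (c (sedge s)) else c (sedge s)))"
proof -
  have pa: "hasc F ep c a p" using hasc_s[OF p(1)] p(2) by simp
  have pb: "\<not> hasc F ep c b p" using hasc_s[OF p(1)] p(2) ab(3) by simp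
  obtain c' Ob q where K: "proper_on F ep c'" "\<forall>e\<in>F. \<forall>v\<in>ends ep e. c' e = (if v \<in> Ob then sw a b (c e) else c e)"
     "p \<in> Ob" "q \<in> Ob" "q \<noteq> p" "is_end F ep c a b q" "\<forall>v\<in>Ob. is_end F ep c a b v \<longrightarrow> v = p \<or> v = q"
    using kempe[OF finF nlF pr ab(3) pa pb] by blast
  have qc: "q \<in> {h2, h3, h4, h5, w} \<and> c (sedge q) \<in> {a, b}" using endcand[OF pr lt ab(1,2) K(6)] .
  have lt': "\<forall>e\<in>F. c' e < 3"
  proof
    fix e assume e: "e \<in> F"
    obtain v where "v \<in> ends ep e" unfolding ends_def by auto
    thus "c' e < 3" using K(2) e lt ab unfolding sw_def by auto
  qed
  have spec: "c' (sedge s) = (if s \<in> {p, q} \<and> c (sedge s) \<in> {a, b} then sw a b (c (sedge s)) else c (sedge s))"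
    if s: "s \<in> {h2, h3, h4, h5, w}" for s
  proof -
    have se: "sedge s \<in> F" "s \<in> ends ep (sedge s)" using sedge_inc[OF s] by auto
    have c1: "c' (sedge s) = (if s \<in> Ob then sw a b (c (sedge s)) else c (sedge s))" using K(2) se by blast
    show ?thesis
    proof (cases "c (sedge s) \<in> {a, b}")
      case True
      have "is_end F ep c a b s" unfolding is_end_def using hasc_s[OF s] True ab(3) by auto
      hence "s \<in> Ob \<longleftrightarrow> s \<in> {p, q}" using K(3,4,7) by blast
      thus ?thesis using c1 True by simp
    next
      case False
      hence "sw a b (c (sedge s)) = c (sedge s)" unfolding sw_def by auto
      thus ?thesis using c1 False by simp
    qed
  qed
  show ?thesis using K(1,5) lt' qc spec by blast
qed

lemma main_pm: "\<exists>N. perfect_matching V E ep N \<and> e0 \<in> N \<and> e2 \<in> N \<and> e4 \<in> N"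
proof -
  define x where "x = col g"
  define y where "y = col f2"
  define z where "z = col f5"
  define m where "m = col f3"
  have cf: "col g = x" "col f2 = y" "col f3 = m" "col f4 = m" "col f5 = z" "col f1 = y" "col f0 = z"
    using col_facts x_def y_def z_def m_def by auto
  have dxyz: "x \<noteq> y" "x \<noteq> z" "y \<noteq> z" using col_facts cf by metis+
  have lt: "x < 3" "y < 3" "z < 3" "m < 3" using col_lt cf by metis+
  have ltF: "\<forall>e\<in>F. col e < 3" using col_lt by simp
  have sw1: "sw a b a = b" "sw a b b = a" "k \<noteq> a \<Longrightarrow> k \<noteq> b \<Longrightarrow> sw a b k = k" for a b k
    unfolding sw_def by auto
  have "m = x \<or> m = y \<or> m = z" using lt dxyz by linarith
  moreover
  { assume "m = y"
    hence ?thesis using good[OF col_proper ltF] cf dxyz by auto }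
  moreover
  { assume "m = z"
    hence ?thesis using good[OF col_proper ltF] cf dxyz by auto }
  moreover
  { assume mx: "m = x"
    obtain c1 q where S1: "proper_on F ep c1" "\<forall>e\<in>F. c1 e < 3" "q \<in> {h2, h3, h4, h5, w}" "q \<noteq> h2"
      "col (sedge q) \<in> {y, x}" "\<forall>s\<in>{h2, h3, h4, h5, w}. c1 (sedge s) =
        (if s \<in> {h2, q} \<and> col (sedge s) \<in> {y, x} then sw y x (col (sedge s)) else col (sedge s))"
      using kstep[OF col_proper ltF lt(2) lt(1) dxyz(1)[symmetric], of h2] cf sedge_simps by auto
    have q3: "q = h3 \<or> q = h4 \<or> q = w" using S1(3,4,5) sedge_simps cf dxyz by auto
    have sp1: "c1 f2 = (if h2 \<in> {h2, q} \<and> col f2 \<in> {y, x} then sw y x (col f2) else col f2)"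
      "c1 f3 = (if h3 \<in> {h2, q} \<and> col f3 \<in> {y, x} then sw y x (col f3) else col f3)"
      "c1 f4 = (if h4 \<in> {h2, q} \<and> col f4 \<in> {y, x} then sw y x (col f4) else col f4)"
      "c1 f5 = (if h5 \<in> {h2, q} \<and> col f5 \<in> {y, x} then sw y x (col f5) else col f5)"
      "c1 g = (if w \<in> {h2, q} \<and> col g \<in> {y, x} then sw y x (col g) else col g)"
      using S1(6) sedge_simps by auto
    have ?thesis
    proof -
      { assume qw: "q = w"
        have v: "c1 g = y" "c1 f2 = x" "c1 f3 = x" "c1 f4 = x" "c1 f5 = z"
          using sp1 qw cf mx dxyz hdist sw1 by auto
        have ?thesis using good[OF S1(1,2)] v dxyz by auto }
      moreover
      { assume q4: "q = h4"
        have v: "c1 g = x" "c1 f2 = x" "c1 f3 = x" "c1 f4 = y" "c1 f5 = z"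
          using sp1 q4 cf mx dxyz hdist sw1 by auto
        have False
          using contra[OF S1(1,2), of z y x z y z x y] v lt dxyz unfolding d3_def by auto
        hence ?thesis by simp }
      moreover
      { assume q3': "q = h3"
        have v: "c1 g = x" "c1 f2 = x" "c1 f3 = y" "c1 f4 = x" "c1 f5 = z"
          using sp1 q3' cf mx dxyz hdist sw1 by auto
        obtain c2 q' where S2: "proper_on F ep c2" "\<forall>e\<in>F. c2 e < 3" "q' \<in> {h2, h3, h4, h5, w}" "q' \<noteq> h5"
          "c1 (sedge q') \<in> {z, x}" "\<forall>s\<in>{h2, h3, h4, h5, w}. c2 (sedge s) =
            (if s \<in> {h5, q'} \<and> c1 (sedge s) \<in> {z, x} then sw z x (c1 (sedge s)) else c1 (sedge s))"
          using kstep[OF S1(1,2) lt(3) lt(1) dxyz(2)[symmetric], of h5] v sedge_simps by auto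
        have q'3: "q' = h2 \<or> q' = h4 \<or> q' = w" using S2(3,4,5) sedge_simps v dxyz by auto
        have sp2: "c2 f2 = (if h2 \<in> {h5, q'} \<and> c1 f2 \<in> {z, x} then sw z x (c1 f2) else c1 f2)"
          "c2 f3 = (if h3 \<in> {h5, q'} \<and> c1 f3 \<in> {z, x} then sw z x (c1 f3) else c1 f3)"
          "c2 f4 = (if h4 \<in> {h5, q'} \<and> c1 f4 \<in> {z, x} then sw z x (c1 f4) else c1 f4)"
          "c2 f5 = (if h5 \<in> {h5, q'} \<and> c1 f5 \<in> {z, x} then sw z x (c1 f5) else c1 f5)"
          "c2 g = (if w \<in> {h5, q'} \<and> c1 g \<in> {z, x} then sw z x (c1 g) else c1 g)"
          using S2(6) sedge_simps by auto
        { assume qw: "q' = w"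
          have v2: "c2 g = z" "c2 f2 = x" "c2 f3 = y" "c2 f4 = x" "c2 f5 = x"
            using sp2 qw v dxyz hdist sw1 by auto
          have ?thesis using good[OF S2(1,2)] v2 dxyz by auto }
        moreover
        { assume q2: "q' = h2"
          have v2: "c2 g = x" "c2 f2 = z" "c2 f3 = y" "c2 f4 = x" "c2 f5 = x"
            using sp2 q2 v dxyz hdist sw1 by auto
          have False
            using contra[OF S2(1,2), of y z x y x z y z] v2 lt dxyz unfolding d3_def by auto
          hence ?thesis by simp }
        moreover
        { assume q4: "q' = h4"
          have v2: "c2 g = x" "c2 f2 = x" "c2 f3 = y" "c2 f4 = z" "c2 f5 = x"
            using sp2 q4 v dxyz hdist sw1 by auto
          have False
            using contra[OF S2(1,2), of y z x y z x y z] v2 lt dxyz unfolding d3_def by auto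
          hence ?thesis by simp }
        ultimately have ?thesis using q'3 by blast }
      ultimately show ?thesis using q3 by blast
    qed }
  ultimately show ?thesis by blast
qed

end


lemma m6a: "((Suc i mod 6) + r) mod 6 = Suc ((i + r) mod 6) mod (6::nat)"
  by (simp add: mod_add_left_eq mod_Suc_eq)

lemma m6b:
  assumes "j < 6" shows "((j + (6 - r mod 6)) mod 6 + r) mod 6 = (j::nat)"
proof -
  have "((j + (6 - r mod 6)) mod 6 + r) mod 6 = (j + (6 - r mod 6) + r) mod 6"
    by (rule mod_add_left_eq)
  moreover have "r mod 6 < 6" by simp
  moreover have "6 * (r div 6) + r mod 6 = r" by simp
  ultimately have "j + (6 - r mod 6) + r = j + 6 * (1 + r div 6)" by arith
  hence "((j + (6 - r mod 6)) mod 6 + r) mod 6 = (j + 6 * (1 + r div 6)) mod 6"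
    using \<open>((j + (6 - r mod 6)) mod 6 + r) mod 6 = (j + (6 - r mod 6) + r) mod 6\<close> by simp
  moreover have "(j + 6 * (1 + r div 6)) mod 6 = j mod 6" by (simp only: mod_mult_self2)
  ultimately show ?thesis using assms by simp
qed

lemma m6d:
  assumes "i < 6" shows "(((i + r) mod 6) + (6 - r mod 6)) mod 6 = (i::nat)"
proof -
  have "(((i + r) mod 6) + (6 - r mod 6)) mod 6 = (i + r + (6 - r mod 6)) mod 6"
    by (rule mod_add_left_eq)
  moreover have "r mod 6 < 6" by simp
  moreover have "6 * (r div 6) + r mod 6 = r" by simp
  ultimately have "i + r + (6 - r mod 6) = i + 6 * (1 + r div 6)" by arith
  hence "(((i + r) mod 6) + (6 - r mod 6)) mod 6 = (i + 6 * (1 + r div 6)) mod 6"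
    using \<open>(((i + r) mod 6) + (6 - r mod 6)) mod 6 = (i + r + (6 - r mod 6)) mod 6\<close> by simp
  moreover have "(i + 6 * (1 + r div 6)) mod 6 = i mod 6" by (simp only: mod_mult_self2)
  ultimately show ?thesis using assms by simp
qed

lemma m6c: "i < 6 \<Longrightarrow> j < 6 \<Longrightarrow> (i + r) mod 6 = (j + r) mod 6 \<Longrightarrow> i = (j::nat)"
  using m6d[of i r] m6d[of j r] by metis

lemma rot_hex:
  assumes H: "induced_hexagon_on V E ep C vs"
  shows "induced_hexagon_on V E ep C (\<lambda>k. vs ((k + r) mod 6)) \<and> (\<lambda>k. vs ((k + r) mod 6)) ` {..<6} = vs ` {..<6}"
proof -
  define rv where "rv = (\<lambda>k. vs ((k + r) mod 6))"
  define ps where "ps = (\<lambda>j::nat. (j + (6 - r mod 6)) mod 6)"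
  have H1: "inj_on vs {..<6}" and H2: "vs ` {..<6} \<subseteq> V"
    and H3: "\<forall>i<6. card {e\<in>E. ends ep e = {vs i, vs (Suc i mod 6)}} = 1"
    and H4: "\<forall>e\<in>E. ends ep e \<subseteq> vs ` {..<6} \<longrightarrow> (\<exists>i<6. ends ep e = {vs i, vs (Suc i mod 6)})"
    and H5: "C = {e\<in>E. \<exists>i<6. ends ep e = {vs i, vs (Suc i mod 6)}}"
    using H unfolding induced_hexagon_on_def by auto
  have ps6: "ps j < 6" for j unfolding ps_def by simp
  have rvps: "j < 6 \<Longrightarrow> rv (ps j) = vs j" for j unfolding rv_def ps_def using m6b by simp
  have rvS: "rv (Suc i mod 6) = vs (Suc ((i + r) mod 6) mod 6)" for i unfolding rv_def using m6a by simp
  have rvi: "rv i = vs ((i + r) mod 6)" for i unfolding rv_def by simp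
  have img: "rv ` {..<6} = vs ` {..<6}"
  proof
    show "rv ` {..<6} \<subseteq> vs ` {..<6}" unfolding rv_def by auto
    show "vs ` {..<6} \<subseteq> rv ` {..<6}"
    proof
      fix x assume "x \<in> vs ` {..<6}"
      then obtain j where j: "j < 6" "x = vs j" by auto
      thus "x \<in> rv ` {..<6}" using rvps[OF j(1)] ps6 by (metis image_eqI lessThan_iff)
    qed
  qed
  have inj: "inj_on rv {..<6}"
  proof (rule inj_onI)
    fix i j assume ij: "i \<in> {..<6}" "j \<in> {..<6}" "rv i = rv j"
    hence "(i + r) mod 6 = (j + r) mod 6" using H1 unfolding rv_def inj_on_def by simp
    thus "i = j" using m6c[of i j r] ij by simp
  qed
  have pair: "{rv i, rv (Suc i mod 6)} = {vs ((i + r) mod 6), vs (Suc ((i + r) mod 6) mod 6)}" for i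
    using rvS rvi by simp
  have c3: "\<forall>i<6. card {e\<in>E. ends ep e = {rv i, rv (Suc i mod 6)}} = 1"
    using H3 pair by simp
  have ex: "(\<exists>i<6. X = {rv i, rv (Suc i mod 6)}) \<longleftrightarrow> (\<exists>j<6. X = {vs j, vs (Suc j mod 6)})" for X
  proof
    assume "\<exists>i<6. X = {rv i, rv (Suc i mod 6)}"
    then obtain i where "i < 6" "X = {rv i, rv (Suc i mod 6)}" by blast
    thus "\<exists>j<6. X = {vs j, vs (Suc j mod 6)}" using pair by (intro exI[of _ "(i + r) mod 6"]) auto
  next
    assume "\<exists>j<6. X = {vs j, vs (Suc j mod 6)}"
    then obtain j where j: "j < 6" "X = {vs j, vs (Suc j mod 6)}" by blast
    have "(ps j + r) mod 6 = j" using m6b[OF j(1)] unfolding ps_def by simp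
    hence "X = {rv (ps j), rv (Suc (ps j) mod 6)}" using pair[of "ps j"] j by simp
    thus "\<exists>i<6. X = {rv i, rv (Suc i mod 6)}" using ps6 by blast
  qed
  have "induced_hexagon_on V E ep C rv"
    unfolding induced_hexagon_on_def using inj img H2 c3 H4 H5 ex by auto
  thus ?thesis using img rv_def by simp
qed


lemma inj6: "inj_on vs {..<6} \<Longrightarrow> i < 6 \<Longrightarrow> j < 6 \<Longrightarrow> i \<noteq> j \<Longrightarrow> vs i \<noteq> vs (j::nat)"
  using inj_onD by fastforce

lemma hex_adj:
  assumes H: "induced_hexagon_on V E ep C vs" and e: "e \<in> E" "ends ep e = {vs a, vs b}"
    and ab: "a < 6" "b < 6"
  shows "b = Suc a mod 6 \<or> a = Suc b mod 6"
proof -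
  have inj: "inj_on vs {..<6}" using H unfolding induced_hexagon_on_def by simp
  have "ends ep e \<subseteq> vs ` {..<6}" using e(2) ab by auto
  then obtain i where i: "i < 6" "ends ep e = {vs i, vs (Suc i mod 6)}"
    using H e(1) unfolding induced_hexagon_on_def by blast
  have j: "Suc i mod 6 < 6" by simp
  have "{vs a, vs b} = {vs i, vs (Suc i mod 6)}" using i e by simp
  hence "(vs a = vs i \<and> vs b = vs (Suc i mod 6)) \<or> (vs a = vs (Suc i mod 6) \<and> vs b = vs i)"
    by (auto simp: doubleton_eq_iff)
  hence "(a = i \<and> b = Suc i mod 6) \<or> (a = Suc i mod 6 \<and> b = i)"
    using inj ab i(1) j unfolding inj_on_def by auto
  thus ?thesis by auto
qed

lemma tri_pairs:
  assumes "triangle V E ep T" "x \<in> T" "y \<in> T" "x \<noteq> y"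
  shows "\<exists>e\<in>E. ends ep e = {x, y}"
  using assms unfolding triangle_def by (auto simp: insert_commute)

lemma tri_third:
  assumes "triangle V E ep T" "x \<in> T" "y \<in> T" "x \<noteq> y"
  shows "\<exists>z\<in>T. z \<noteq> x \<and> z \<noteq> y"
  using assms unfolding triangle_def by auto

lemma tri_two:
  assumes "triangle V E ep T" "x \<in> T"
  shows "\<exists>u\<in>T. \<exists>u'\<in>T. u \<noteq> x \<and> u' \<noteq> x \<and> u \<noteq> u'"
  using assms unfolding triangle_def by auto

lemma card3_eq:
  assumes "finite I" "card I = 3" "a \<in> I" "b \<in> I" "c \<in> I" "a \<noteq> b" "a \<noteq> c" "b \<noteq> c"
  shows "I = {a, b, c}"
proof -
  have "{a, b, c} \<subseteq> I" using assms by auto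
  moreover have "card {a, b, c} = 3" using assms by auto
  ultimately show ?thesis using card_subset_eq[OF assms(1)] assms(2) by metis
qed

lemma card3_ex:
  assumes "finite I" "card I = 3" "a \<in> I" "b \<in> I" "a \<noteq> b"
  shows "\<exists>c\<in>I. c \<notin> {a, b} \<and> I = {a, b, c}"
proof -
  have "card {a, b} = 2" using assms by simp
  hence "\<not> I \<subseteq> {a, b}" using assms(2) card_mono[of "{a,b}" I] by auto
  then obtain c where c: "c \<in> I" "c \<notin> {a, b}" by auto
  thus ?thesis using card3_eq[OF assms(1,2,3,4) c(1) assms(5)] by auto
qed

lemma card4:
  assumes "finite I" "card I = 3" "a \<in> I" "b \<in> I" "c \<in> I" "d \<in> I"
    "a \<noteq> b" "a \<noteq> c" "a \<noteq> d" "b \<noteq> c" "b \<noteq> d" "c \<noteq> d"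
  shows False
proof -
  have "{a, b, c, d} \<subseteq> I" using assms by auto
  moreover have "card {a, b, c, d} = 4" using assms by auto
  ultimately have "4 \<le> card I" using card_mono[OF assms(1)] by metis
  thus False using assms(2) by simp
qed

lemma hex_edge_ex:
  assumes H: "induced_hexagon_on V E ep C vs" and i: "i < 6"
  shows "\<exists>e\<in>E. ends ep e = {vs i, vs (Suc i mod 6)}"
proof -
  have "card {e\<in>E. ends ep e = {vs i, vs (Suc i mod 6)}} = 1" using H i unfolding induced_hexagon_on_def by blast
  then obtain x where "{e\<in>E. ends ep e = {vs i, vs (Suc i mod 6)}} = {x}" by (rule card_1_singletonE)
  thus ?thesis by blast
qed

lemma tri_adj:
  assumes H: "induced_hexagon_on V E ep C vs" and finE: "finite E"
    and inc3: "\<forall>v\<in>V. card {e\<in>E. v \<in> ends ep e} = 3"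
    and tri: "triangle V E ep T" and t0: "vs 0 \<in> T"
  shows "vs 1 \<in> T \<or> vs 5 \<in> T"
proof (rule ccontr)
  assume nt: "\<not> (vs 1 \<in> T \<or> vs 5 \<in> T)"
  have inj: "inj_on vs {..<6}" and sub: "vs ` {..<6} \<subseteq> V" using H unfolding induced_hexagon_on_def by auto
  have d15: "vs 1 \<noteq> vs 5" "vs 0 \<noteq> vs 1" "vs 0 \<noteq> vs 5" using inj6[OF inj] by auto
  obtain u u' where u: "u \<in> T" "u' \<in> T" "u \<noteq> vs 0" "u' \<noteq> vs 0" "u \<noteq> u'" using tri_two[OF tri t0] by blast
  have nh: "x \<notin> vs ` {..<6}" if x: "x \<in> T" "x \<noteq> vs 0" for x
  proof
    assume "x \<in> vs ` {..<6}"
    then obtain j where j: "j < 6" "x = vs j" by auto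
    obtain ex where ex: "ex \<in> E" "ends ep ex = {vs 0, x}" using tri_pairs[OF tri t0 x(1)] x(2) by metis
    have "j = Suc 0 mod 6 \<or> 0 = Suc j mod 6" using hex_adj[OF H ex(1) _ _ j(1), of 0] ex(2) j(2) by simp
    moreover have "j \<in> {0, 1, 2, 3, 4, 5}" using j(1) by auto
    ultimately have "j = 1 \<or> j = 5" by auto
    thus False using nt x j by auto
  qed
  have nu: "u \<notin> vs ` {..<6}" "u' \<notin> vs ` {..<6}" using nh u by auto
  obtain a where a: "a \<in> E" "ends ep a = {vs 0, u}" using tri_pairs[OF tri t0 u(1)] u(3) by metis
  obtain b where b: "b \<in> E" "ends ep b = {vs 0, u'}" using tri_pairs[OF tri t0 u(2)] u(4) by metis
  obtain c where c: "c \<in> E" "ends ep c = {vs 0, vs 1}" using hex_edge_ex[OF H, of 0] by auto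
  obtain d where d: "d \<in> E" "ends ep d = {vs 5, vs 0}" using hex_edge_ex[OF H, of 5] by auto
  have v1: "vs 1 \<in> vs ` {..<6}" "vs 5 \<in> vs ` {..<6}" by auto
  have "vs 0 \<in> V" using sub by auto
  hence cd: "card {e\<in>E. vs 0 \<in> ends ep e} = 3" using inc3 by auto
  show False
    apply (rule card4[OF _ cd, of a b c d])
    using finE a b c d u nu v1 d15 by (auto simp: doubleton_eq_iff)
qed

lemma wlog_hex:
  assumes H: "induced_hexagon_on V E ep C vs" and finE: "finite E"
    and inc3: "\<forall>v\<in>V. card {e\<in>E. v \<in> ends ep e} = 3"
    and tri: "triangle V E ep T" and meet: "T \<inter> vs ` {..<6} \<noteq> {}"
  shows "\<exists>vs'. induced_hexagon_on V E ep C vs' \<and> vs' 0 \<in> T \<and> vs' 1 \<in> T"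
proof -
  obtain j where j: "j < 6" "vs j \<in> T" using meet by auto
  define v1 where "v1 = (\<lambda>k. vs ((k + j) mod 6))"
  have H1: "induced_hexagon_on V E ep C v1" using rot_hex[OF H, of j] v1_def by simp
  have t0: "v1 0 \<in> T" using j v1_def by simp
  show ?thesis
  proof (cases "v1 1 \<in> T")
    case True thus ?thesis using H1 t0 by blast
  next
    case False
    hence t5: "v1 5 \<in> T" using tri_adj[OF H1 finE inc3 tri t0] by blast
    define v2 where "v2 = (\<lambda>k. v1 ((k + 5) mod 6))"
    have H2: "induced_hexagon_on V E ep C v2" using rot_hex[OF H1, of 5] v2_def by simp
    have "v2 0 = v1 5" "v2 1 = v1 0" unfolding v2_def by simp_all
    thus ?thesis using H2 t0 t5 by metis
  qed
qed


lemma build: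
  assumes finE: "finite E" and inV: "\<forall>e\<in>E. fst (ep e) \<in> V \<and> snd (ep e) \<in> V"
    and nl: "\<forall>e\<in>E. \<not> is_loop ep e"
    and inc3: "\<forall>v\<in>V. card {e\<in>E. v \<in> ends ep e} = 3"
    and pm1: "perfect_matching V E ep M1" and pm2: "perfect_matching V E ep M2"
    and pm3: "perfect_matching V E ep M3"
    and ncol: "\<not> three_edge_colourable E ep"
    and H: "induced_hexagon_on V E ep (core E (M1, M2, M3)) vs"
    and tri: "triangle V E ep T" and t0: "vs 0 \<in> T" and t1: "vs 1 \<in> T"
  shows "\<exists>N. perfect_matching V E ep N \<and> (\<forall>e\<in>E. e \<in> M1 \<or> e \<in> M2 \<or> e \<in> M3 \<or> e \<in> N)
     \<and> N \<noteq> M1 \<and> N \<noteq> M2 \<and> N \<noteq> M3"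
proof -
  have inj: "inj_on vs {..<6}" and sub: "vs ` {..<6} \<subseteq> V"
    and H3: "\<forall>i<6. card {e\<in>E. ends ep e = {vs i, vs (Suc i mod 6)}} = 1"
    and H5: "core E (M1, M2, M3) = {e\<in>E. \<exists>i<6. ends ep e = {vs i, vs (Suc i mod 6)}}"
    using H unfolding induced_hexagon_on_def by auto
  define he where "he i = (THE x. x \<in> E \<and> ends ep x = {vs i, vs (Suc i mod 6)})" for i
  have heP: "he i \<in> E \<and> ends ep (he i) = {vs i, vs (Suc i mod 6)} \<and>
     (\<forall>x. x \<in> E \<and> ends ep x = {vs i, vs (Suc i mod 6)} \<longrightarrow> x = he i)" if i: "i < 6" for i
  proof -
    obtain y where y: "{e\<in>E. ends ep e = {vs i, vs (Suc i mod 6)}} = {y}"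
      using H3 i by (meson card_1_singletonE)
    have yy: "y \<in> E" "ends ep y = {vs i, vs (Suc i mod 6)}" using y by auto
    have yu: "\<And>x. x \<in> E \<and> ends ep x = {vs i, vs (Suc i mod 6)} \<Longrightarrow> x = y" using y by auto
    have "he i = y" unfolding he_def
    proof (rule the_equality)
      show "y \<in> E \<and> ends ep y = {vs i, vs (Suc i mod 6)}" using yy by simp
      show "\<And>x. x \<in> E \<and> ends ep x = {vs i, vs (Suc i mod 6)} \<Longrightarrow> x = y" by (rule yu)
    qed
    thus ?thesis using yy yu by blast
  qed
  have q: "Suc 0 mod 6 = (1::nat)" "Suc 1 mod 6 = (2::nat)" "Suc 2 mod 6 = (3::nat)" "Suc 3 mod 6 = (4::nat)"
    "Suc 4 mod 6 = (5::nat)" "Suc 5 mod 6 = (0::nat)" by simp_all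
  have he0: "he 0 \<in> E" "ends ep (he 0) = {vs 0, vs 1}" using heP[of 0, unfolded q] by auto
  have he1: "he 1 \<in> E" "ends ep (he 1) = {vs 1, vs 2}" using heP[of 1, unfolded q] by auto
  have he2: "he 2 \<in> E" "ends ep (he 2) = {vs 2, vs 3}" using heP[of 2, unfolded q] by auto
  have he3: "he 3 \<in> E" "ends ep (he 3) = {vs 3, vs 4}" using heP[of 3, unfolded q] by auto
  have he4: "he 4 \<in> E" "ends ep (he 4) = {vs 4, vs 5}" using heP[of 4, unfolded q] by auto
  have he5: "he 5 \<in> E" "ends ep (he 5) = {vs 5, vs 0}" using heP[of 5, unfolded q] by auto
  have dvs: "vs i \<noteq> vs j" if "i < 6" "j < 6" "i \<noteq> j" for i j using inj6[OF inj] that by blast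
  have d: "vs 0 \<noteq> vs 1" "vs 0 \<noteq> vs 2" "vs 0 \<noteq> vs 3" "vs 0 \<noteq> vs 4" "vs 0 \<noteq> vs 5"
    "vs 1 \<noteq> vs 2" "vs 1 \<noteq> vs 3" "vs 1 \<noteq> vs 4" "vs 1 \<noteq> vs 5"
    "vs 2 \<noteq> vs 3" "vs 2 \<noteq> vs 4" "vs 2 \<noteq> vs 5" "vs 3 \<noteq> vs 4" "vs 3 \<noteq> vs 5" "vs 4 \<noteq> vs 5"
    using dvs by auto
  obtain w where w: "w \<in> T" "w \<noteq> vs 0" "w \<noteq> vs 1" using tri_third[OF tri t0 t1 d(1)] by blast
  obtain f0 where f0: "f0 \<in> E" "ends ep f0 = {vs 0, w}" using tri_pairs[OF tri t0 w(1)] w(2) by metis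
  obtain f1 where f1: "f1 \<in> E" "ends ep f1 = {vs 1, w}" using tri_pairs[OF tri t1 w(1)] w(3) by metis
  have wn: "w \<notin> vs ` {..<6}"
  proof
    assume "w \<in> vs ` {..<6}"
    then obtain j where j: "j < 6" "w = vs j" by auto
    have a: "j = Suc 0 mod 6 \<or> 0 = Suc j mod 6" using hex_adj[OF H f0(1) _ _ j(1), of 0] f0(2) j(2) by simp
    have b: "j = Suc 1 mod 6 \<or> 1 = Suc j mod 6" using hex_adj[OF H f1(1) _ _ j(1), of 1] f1(2) j(2) by simp
    have "j = 0 \<or> j = 1 \<or> j = 2 \<or> j = 3 \<or> j = 4 \<or> j = 5" using j(1) by linarith
    thus False
    proof (elim disjE)
      assume "j = 0" thus False using a by simp
    next
      assume "j = 1" thus False using b by simp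
    next
      assume "j = 2" thus False using a by simp
    next
      assume "j = 3" thus False using a by simp
    next
      assume "j = 4" thus False using a by simp
    next
      assume "j = 5" thus False using b by simp
    qed
  qed
  have wne: "w \<noteq> vs i" if "i < 6" for i using wn that by auto
  have wV: "w \<in> V" using f0 inV unfolding ends_def by (auto simp: doubleton_eq_iff)
  have hV: "vs 0 \<in> V" "vs 1 \<in> V" "vs 2 \<in> V" "vs 3 \<in> V" "vs 4 \<in> V" "vs 5 \<in> V" using sub by auto
  have finI: "finite {e\<in>E. v \<in> ends ep e}" for v using finE by simp
  have cI: "card {e\<in>E. v \<in> ends ep e} = 3" if "v \<in> V" for v using inc3 that by simp
  have w05: "w \<noteq> vs 0" "w \<noteq> vs 1" "w \<noteq> vs 2" "w \<noteq> vs 3" "w \<noteq> vs 4" "w \<noteq> vs 5" using wne by auto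
  have ds: "he 0 \<noteq> he 5" "he 0 \<noteq> f0" "he 5 \<noteq> f0" "he 0 \<noteq> he 1" "he 0 \<noteq> f1" "he 1 \<noteq> f1"
    "he 1 \<noteq> he 2" "he 2 \<noteq> he 3" "he 3 \<noteq> he 4" "he 4 \<noteq> he 5" "f0 \<noteq> f1"
    using he0 he1 he2 he3 he4 he5 f0 f1 d w05 by (auto simp: doubleton_eq_iff)
  have mm: "he 0 \<in> {e\<in>E. vs 0 \<in> ends ep e}" "he 5 \<in> {e\<in>E. vs 0 \<in> ends ep e}" "f0 \<in> {e\<in>E. vs 0 \<in> ends ep e}"
    "he 0 \<in> {e\<in>E. vs 1 \<in> ends ep e}" "he 1 \<in> {e\<in>E. vs 1 \<in> ends ep e}" "f1 \<in> {e\<in>E. vs 1 \<in> ends ep e}"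
    "he 1 \<in> {e\<in>E. vs 2 \<in> ends ep e}" "he 2 \<in> {e\<in>E. vs 2 \<in> ends ep e}"
    "he 2 \<in> {e\<in>E. vs 3 \<in> ends ep e}" "he 3 \<in> {e\<in>E. vs 3 \<in> ends ep e}"
    "he 3 \<in> {e\<in>E. vs 4 \<in> ends ep e}" "he 4 \<in> {e\<in>E. vs 4 \<in> ends ep e}"
    "he 4 \<in> {e\<in>E. vs 5 \<in> ends ep e}" "he 5 \<in> {e\<in>E. vs 5 \<in> ends ep e}"
    "f0 \<in> {e\<in>E. w \<in> ends ep e}" "f1 \<in> {e\<in>E. w \<in> ends ep e}"
    using he0 he1 he2 he3 he4 he5 f0 f1 by auto
  have ic0: "{e\<in>E. vs 0 \<in> ends ep e} = {he 0, he 5, f0}"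
    by (rule card3_eq[OF finI cI[OF hV(1)] mm(1,2,3) ds(1,2,3)])
  have ic1: "{e\<in>E. vs 1 \<in> ends ep e} = {he 0, he 1, f1}"
    by (rule card3_eq[OF finI cI[OF hV(2)] mm(4,5,6) ds(4,5,6)])
  obtain f2 where f2: "f2 \<notin> {he 1, he 2}" "{e\<in>E. vs 2 \<in> ends ep e} = {he 1, he 2, f2}"
    using card3_ex[OF finI cI[OF hV(3)] mm(7,8) ds(7)] by blast
  obtain f3 where f3: "f3 \<notin> {he 2, he 3}" "{e\<in>E. vs 3 \<in> ends ep e} = {he 2, he 3, f3}"
    using card3_ex[OF finI cI[OF hV(4)] mm(9,10) ds(8)] by blast
  obtain f4 where f4: "f4 \<notin> {he 3, he 4}" "{e\<in>E. vs 4 \<in> ends ep e} = {he 3, he 4, f4}"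
    using card3_ex[OF finI cI[OF hV(5)] mm(11,12) ds(9)] by blast
  obtain f5 where f5: "f5 \<notin> {he 4, he 5}" "{e\<in>E. vs 5 \<in> ends ep e} = {he 4, he 5, f5}"
    using card3_ex[OF finI cI[OF hV(6)] mm(13,14) ds(10)] by blast
  obtain g where g: "g \<notin> {f0, f1}" "{e\<in>E. w \<in> ends ep e} = {f0, f1, g}"
    using card3_ex[OF finI cI[OF wV] mm(15,16) ds(11)] by blast
  have fE: "f2 \<in> E" "f3 \<in> E" "f4 \<in> E" "f5 \<in> E" "g \<in> E" using f2 f3 f4 f5 g by blast+
  have core': "\<forall>e\<in>E. cover_count (M1, M2, M3) e \<noteq> 1 \<longleftrightarrow> e \<in> {he 0, he 1, he 2, he 3, he 4, he 5}"
  proof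
    fix e assume e: "e \<in> E"
    have "cover_count (M1, M2, M3) e \<noteq> 1 \<longleftrightarrow> e \<in> core E (M1, M2, M3)" using e unfolding core_def by simp
    also have "\<dots> \<longleftrightarrow> (\<exists>i<6. ends ep e = {vs i, vs (Suc i mod 6)})" using H5 e by simp
    also have "\<dots> \<longleftrightarrow> (\<exists>i<6. e = he i)" using heP e by blast
    also have "\<dots> \<longleftrightarrow> e \<in> {he 0, he 1, he 2, he 3, he 4, he 5}"
    proof
      assume "\<exists>i<6. e = he i"
      then obtain i where i6: "i < 6" "e = he i" by blast
      have "i = 0 \<or> i = 1 \<or> i = 2 \<or> i = 3 \<or> i = 4 \<or> i = 5" using i6(1) by linarith
      thus "e \<in> {he 0, he 1, he 2, he 3, he 4, he 5}" using i6(2) by (elim disjE) simp_all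
    next
      assume "e \<in> {he 0, he 1, he 2, he 3, he 4, he 5}"
      hence "e = he 0 \<or> e = he 1 \<or> e = he 2 \<or> e = he 3 \<or> e = he 4 \<or> e = he 5" by simp
      moreover have wit: "\<And>k. k < 6 \<Longrightarrow> e = he k \<Longrightarrow> \<exists>i<6. e = he i" by blast
      ultimately show "\<exists>i<6. e = he i"
        using wit[of 0] wit[of 1] wit[of 2] wit[of 3] wit[of 4] wit[of 5] by auto
    qed
    finally show "cover_count (M1, M2, M3) e \<noteq> 1 \<longleftrightarrow> e \<in> {he 0, he 1, he 2, he 3, he 4, he 5}" .
  qed
  have dv: "distinct [vs 0, vs 1, vs 2, vs 3, vs 4, vs 5, w]" using d w05 by auto
  have ctx: "hexctx V E ep M1 M2 M3 (vs 0) (vs 1) (vs 2) (vs 3) (vs 4) (vs 5) w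
      (he 0) (he 1) (he 2) (he 3) (he 4) (he 5) f0 f1 f2 f3 f4 f5 g"
    by (rule hexctx.intro) (fact finE inV nl inc3 pm1 pm2 pm3 ncol dv hV wV he0 he1 he2 he3 he4 he5
        f0 f1 fE f2 f3 f4 f5 g core' ic0 ic1)+
  obtain N where N: "perfect_matching V E ep N" "he 0 \<in> N" "he 2 \<in> N" "he 4 \<in> N"
    using hexctx.main_pm[OF ctx] by blast
  have cov: "\<forall>e\<in>E. e \<in> M1 \<or> e \<in> M2 \<or> e \<in> M3 \<or> e \<in> N"
    using hexctx.covered[OF ctx] N by blast
  have "he 0 \<notin> M1" "he 0 \<notin> M2" "he 0 \<notin> M3" using hexctx.atoms[OF ctx] by auto
  hence "N \<noteq> M1" "N \<noteq> M2" "N \<noteq> M3" using N by auto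
  thus ?thesis using N cov by blast
qed


lemma few_pm:
  assumes inV: "\<forall>e\<in>E. fst (ep e) \<in> V \<and> snd (ep e) \<in> V"
    and fin: "finite Fs" and cardF: "card Fs \<le> 3" and pms: "\<forall>M\<in>Fs. perfect_matching V E ep M"
    and un: "\<Union>Fs = E"
  shows "three_edge_colourable E ep"
proof -
  obtain xs where xs: "set xs = Fs" "distinct xs" using finite_distinct_list[OF fin] by blast
  have len: "length xs \<le> 3" using distinct_card[OF xs(2)] xs(1) cardF by simp
  define c where "c e = (LEAST i. i < length xs \<and> e \<in> xs ! i)" for e
  have cP: "c e < length xs \<and> e \<in> xs ! (c e)" if e: "e \<in> E" for e
  proof -
    obtain M where M: "M \<in> Fs" "e \<in> M" using un e by blast
    then obtain i where "i < length xs" "xs ! i = M" using xs(1) by (metis in_set_conv_nth)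
    hence "\<exists>i. i < length xs \<and> e \<in> xs ! i" using M by blast
    thus ?thesis unfolding c_def by (rule LeastI_ex)
  qed
  have pmi: "perfect_matching V E ep (xs ! i)" if "i < length xs" for i
    using pms xs(1) that by auto
  show ?thesis
    unfolding three_edge_colourable_def
  proof (intro exI[of _ c] conjI ballI impI)
    fix e assume e: "e \<in> E"
    show "c e < 3" using cP[OF e] len by simp
    show "\<not> is_loop ep e" using cP[OF e] pmi[of "c e"] unfolding perfect_matching_def by blast
  next
    fix e f assume ef: "e \<in> E" "f \<in> E" "e \<noteq> f \<and> ends ep e \<inter> ends ep f \<noteq> {}"
    show "c e \<noteq> c f"
    proof
      assume eq: "c e = c f"
      obtain v where v: "v \<in> ends ep e" "v \<in> ends ep f" using ef by blast
      have vV: "v \<in> V" using v(1) ef(1) inV unfolding ends_def by auto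
      have "e \<in> xs ! (c e)" using cP[OF ef(1)] by simp
      moreover have "f \<in> xs ! (c e)" using cP[OF ef(2)] eq by simp
      hence "e = f" using pm_two[OF pmi[of "c e"] vV _ _ v] cP[OF ef(1)] by blast
      thus False using ef by simp
    qed
  qed
qed

theorem theorem5p4:
  fixes V :: "'v set" and E :: "'e set" and ep :: "'e \<Rightarrow> 'v \<times> 'v"
  assumes "snark V E ep"
    and "colouring_defect V E ep = 3"
    and "\<exists>A vs T. optimal_array V E ep A \<and> induced_hexagon_on V E ep (core E A) vs \<and>
           triangle V E ep T \<and> T \<inter> vs ` {..<6} \<noteq> {}"
  shows "perfect_matching_index V E ep = 4"
proof -
  have cub: "cubic V E ep" and ncol: "\<not> three_edge_colourable E ep"
    using assms(1) unfolding snark_def by auto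
  have finE: "finite E" and inV: "\<forall>e\<in>E. fst (ep e) \<in> V \<and> snd (ep e) \<in> V"
    and deg: "\<forall>v\<in>V. degree E ep v = 3"
    using cub unfolding cubic_def graph_def by auto
  obtain A vs T where opt: "optimal_array V E ep A" and H: "induced_hexagon_on V E ep (core E A) vs"
    and tri: "triangle V E ep T" and meet: "T \<inter> vs ` {..<6} \<noteq> {}"
    using assms(3) by blast
  obtain M1 M2 M3 where A: "A = (M1, M2, M3)" by (cases A) auto
  have pm1: "perfect_matching V E ep M1" and pm2: "perfect_matching V E ep M2"
    and pm3: "perfect_matching V E ep M3" and dM: "M1 \<noteq> M2" "M1 \<noteq> M3" "M2 \<noteq> M3"
    using opt A unfolding optimal_array_def three_array_def by auto
  have nl: "\<forall>e\<in>E. \<not> is_loop ep e"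
  proof (intro ballI notI)
    fix e assume e: "e \<in> E" and lp: "is_loop ep e"
    have "e \<notin> M1" "e \<notin> M2" "e \<notin> M3" using pm1 pm2 pm3 lp unfolding perfect_matching_def by auto
    hence "cover_count A e \<noteq> 1" unfolding A cover_count_def by simp
    hence "e \<in> core E A" using e unfolding core_def by simp
    then obtain i where i: "i < 6" "ends ep e = {vs i, vs (Suc i mod 6)}"
      using H unfolding induced_hexagon_on_def by auto
    have inj: "inj_on vs {..<6}" using H unfolding induced_hexagon_on_def by simp
    have j6: "Suc i mod 6 < 6" by simp
    have ij: "i \<noteq> Suc i mod 6" using i(1) by (cases "i = 5") auto
    have "vs i \<noteq> vs (Suc i mod 6)" using inj6[OF inj i(1) j6 ij] .
    moreover have "ends ep e = {fst (ep e)}" using lp unfolding is_loop_def ends_def by simp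
    ultimately show False using i(2) by (metis doubleton_eq_iff singleton_insert_inj_eq)
  qed
  have inc3: "\<forall>v\<in>V. card {e\<in>E. v \<in> ends ep e} = 3"
  proof
    fix v assume v: "v \<in> V"
    have "{e\<in>E. v \<in> ends ep e} = {e\<in>E. fst (ep e) = v} \<union> {e\<in>E. snd (ep e) = v}"
      unfolding ends_def by auto
    moreover have "{e\<in>E. fst (ep e) = v} \<inter> {e\<in>E. snd (ep e) = v} = {}"
      using nl unfolding is_loop_def by auto
    ultimately have "card {e\<in>E. v \<in> ends ep e} = card {e\<in>E. fst (ep e) = v} + card {e\<in>E. snd (ep e) = v}"
      using finE by (simp add: card_Un_disjoint)
    thus "card {e\<in>E. v \<in> ends ep e} = 3" using deg v unfolding degree_def by simp
  qed
  obtain vs' where H': "induced_hexagon_on V E ep (core E A) vs'" "vs' 0 \<in> T" "vs' 1 \<in> T"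
    using wlog_hex[OF H finE inc3 tri meet] by blast
  obtain N where N: "perfect_matching V E ep N" "\<forall>e\<in>E. e \<in> M1 \<or> e \<in> M2 \<or> e \<in> M3 \<or> e \<in> N"
    "N \<noteq> M1" "N \<noteq> M2" "N \<noteq> M3"
    using build[OF finE inV nl inc3 pm1 pm2 pm3 ncol H'(1)[unfolded A] tri H'(2,3)] by blast
  let ?P = "\<lambda>k. \<exists>F. finite F \<and> card F = k \<and> (\<forall>M\<in>F. perfect_matching V E ep M) \<and> \<Union>F = E"
  have P4: "?P 4"
  proof (intro exI[of _ "{M1, M2, M3, N}"] conjI)
    show "finite {M1, M2, M3, N}" by simp
    show "card {M1, M2, M3, N} = 4" using dM N(3-5) by auto
    show "\<forall>M\<in>{M1, M2, M3, N}. perfect_matching V E ep M" using pm1 pm2 pm3 N(1) by auto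
    show "\<Union>{M1, M2, M3, N} = E"
    proof
      show "\<Union>{M1, M2, M3, N} \<subseteq> E" using pm1 pm2 pm3 N(1) unfolding perfect_matching_def by auto
      show "E \<subseteq> \<Union>{M1, M2, M3, N}" using N(2) by auto
    qed
  qed
  have low: "4 \<le> k" if Pk: "?P k" for k
  proof (rule ccontr)
    assume "\<not> 4 \<le> k"
    hence k3: "k \<le> 3" by simp
    obtain Fs where Fs: "finite Fs" "card Fs = k" "\<forall>M\<in>Fs. perfect_matching V E ep M" "\<Union>Fs = E"
      using Pk by blast
    have "card Fs \<le> 3" using Fs(2) k3 by simp
    thus False using few_pm[OF inV Fs(1) _ Fs(3) Fs(4)] ncol by blast
  qed
  show ?thesis unfolding perfect_matching_index_def
  proof (rule Least_equality)
    show "?P 4" by (rule P4)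
    show "\<And>y. ?P y \<Longrightarrow> 4 \<le> y" by (rule low)
  qed
qed

end
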